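(* For every $\varepsilon\in(0,1]$ there exists $b_0$ such that for every $b\geq b_0$ there exists $\gamma_0>0$ such that for every $\gamma\in(0,\gamma_0]$ there exists $n_0$ such that for every $n\geq n_0$ the following holds. Let $G$ be an $(n,\varepsilon)$-digraph and $\mathbf{x}$ a $b$-normal perfect fractional matching of $G$. Let $\Delta:=e^{\gamma\sqrt{\ln n}}$, let $T=(r_0,\ldots,r_m)$ be an oriented tree with $\Delta(T)\leq\Delta$ and $n^{1/4}+1\leq|T|\leq3\Delta n^{1/4}$, and let $R=(R_0,\ldots,R_m)$ be a random tree in $G$ according to $T$ and $\mathbf{x}$. Let $\mathcal{S}$ be a collection of at most $n^2$ subsets of $V(G)$. Let $\mathcal{E}$ be the event that $R$ is self-avoiding and $\{R_0,\ldots,R_m\}$ is $(\mathcal{S},n^{\frac14-\frac1{17\sqrt{\ln n}}},n^{-\frac34-\frac1{18\sqrt{\ln n}}})$-expected. Then $\mathbb{P}[\mathcal{E}]\geq1-m^2\frac bn-n^2\frac1{n^3}-4n\frac1{n^3}\geq1-n^{-1/3}$.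
   Context: $\log=\log_2$, $\ln$ natural logarithm. Digraphs have no loops and at most one edge from $v$ to $w$ per ordered pair. An $(n,\varepsilon)$-digraph is a digraph on $n$ vertices with every in- and out-degree at least $(\frac12+\varepsilon)n$. A perfect fractional matching of $G$ is $\mathbf{x}\colon E(G)\to\mathbb{R}_{\geq0}$ with $\sum_{w\in N^+(v)}\mathbf{x}_{vw}=1=\sum_{w\in N^-(v)}\mathbf{x}_{wv}$ for all $v$; it is $b$-normal if $\frac1{bn}\leq\mathbf{x}_e\leq\frac bn$ for all $e$. $h^+_{\mathbf{x}}(v)=\sum_{w\in N^+(v)}\mathbf{x}_{vw}\log\frac1{\mathbf{x}_{vw}}$, $h^-_{\mathbf{x}}(v)=\sum_{w\in N^-(v)}\mathbf{x}_{wv}\log\frac1{\mathbf{x}_{wv}}$. $T=(r_0,\ldots,r_m)$ is $T$ rooted at $r_0$ with a breadth-first ordering; $\Delta(T)$ is the max degree of the underlying tree. A random tree according to $T$ and $\mathbf{x}$ is a random vector $R=(R_0,\dots,R_m)$ where $R_0$ is a fixed vertex of $G$ and, for each $j\geq1$ with parent $r_i$ of $r_j$, conditionally on $R_i=v$ and on the values of all $R_{i'}$ with $r_{i'}$ not a descendant of $r_j$ and $i'\neq i$, $R_j=w$ with probability $\mathbf{x}_{vw}$ if $r_ir_j\in E(T)$, $vw\in E(G)$; $\mathbf{x}_{wv}$ if $r_jr_i\in E(T)$, $wv\in E(G)$; $0$ otherwise. $R$ is self-avoiding if $R_i\neq R_j$ for all $i\neq j$. A set $M\subseteq V(G)$ is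 $(\mathcal{S},a)$-expected if $\big||M\cap S|-\frac{|M|}n|S|\big|<a$ for every $S\in\mathcal{S}$; it is $c$-expected if for every $v\in V(G)$: $\big|\sum_{w\in N^+(v)\cap M}\mathbf{x}_{vw}-\frac{|M|}n\big|<c$, $\big|\sum_{w\in N^+(v)\cap M}\mathbf{x}_{vw}\log\frac1{\mathbf{x}_{vw}}-\frac{|M|}nh^+_{\mathbf{x}}(v)\big|<c$, and the analogous two inequalities with $N^-(v)$, $\mathbf{x}_{wv}$ and $h^-_{\mathbf{x}}(v)$ hold; it is $(\mathcal{S},a,c)$-expected if it is both. *)

theory Defs
  imports Complex_Main "HOL-Library.FuncSet"
begin

definition out_nbrs :: "(nat \<times> nat) set \<Rightarrow> nat \<Rightarrow> nat set" where
  "out_nbrs E v = {w. (v, w) \<in> E}"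

definition in_nbrs :: "(nat \<times> nat) set \<Rightarrow> nat \<Rightarrow> nat set" where
  "in_nbrs E v = {w. (w, v) \<in> E}"

definition eps_digraph :: "nat \<Rightarrow> real \<Rightarrow> nat set \<Rightarrow> (nat \<times> nat) set \<Rightarrow> bool" where
  "eps_digraph n \<epsilon> V E \<longleftrightarrow> finite V \<and> card V = n \<and> E \<subseteq> V \<times> V \<and> (\<forall>v. (v, v) \<notin> E) \<and>
     (\<forall>v\<in>V. real (card (out_nbrs E v)) \<ge> (1/2 + \<epsilon>) * real n \<and>
            real (card (in_nbrs E v)) \<ge> (1/2 + \<epsilon>) * real n)"

definition perfect_fractional_matching ::
  "nat set \<Rightarrow> (nat \<times> nat) set \<Rightarrow> (nat \<Rightarrow> nat \<Rightarrow> real) \<Rightarrow> bool" where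
  "perfect_fractional_matching V E x \<longleftrightarrow>
     (\<forall>(v, w)\<in>E. x v w \<ge> 0) \<and>
     (\<forall>v\<in>V. (\<Sum>w\<in>out_nbrs E v. x v w) = 1 \<and> (\<Sum>w\<in>in_nbrs E v. x w v) = 1)"

definition b_normal :: "nat \<Rightarrow> real \<Rightarrow> (nat \<times> nat) set \<Rightarrow> (nat \<Rightarrow> nat \<Rightarrow> real) \<Rightarrow> bool" where
  "b_normal n b E x \<longleftrightarrow> (\<forall>(v, w)\<in>E. 1 / (b * real n) \<le> x v w \<and> x v w \<le> b / real n)"

definition h_out :: "(nat \<times> nat) set \<Rightarrow> (nat \<Rightarrow> nat \<Rightarrow> real) \<Rightarrow> nat \<Rightarrow> real" where
  "h_out E x v = (\<Sum>w\<in>out_nbrs E v. x v w * log 2 (1 / x v w))"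

definition h_in :: "(nat \<times> nat) set \<Rightarrow> (nat \<Rightarrow> nat \<Rightarrow> real) \<Rightarrow> nat \<Rightarrow> real" where
  "h_in E x v = (\<Sum>w\<in>in_nbrs E v. x w v * log 2 (1 / x w v))"

(* Oriented trees T = (r_0,...,r_m): vertex r_i is the natural number i, A is the arc set.
   The parent of r_j (j >= 1) is the unique earlier vertex adjacent to it. *)
definition tree_parent :: "(nat \<times> nat) set \<Rightarrow> nat \<Rightarrow> nat" where
  "tree_parent A j = (THE i. i < j \<and> ((i, j) \<in> A \<or> (j, i) \<in> A))"

(* A is an oriented tree on {0..m} rooted at 0, and 0,...,m is a breadth-first ordering:
   every j >= 1 has exactly one adjacent earlier vertex (its parent), every arc joins a
   vertex to its parent, no pair is joined in both directions, and parents are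
   non-decreasing along the ordering (breadth-first). *)
definition bfs_oriented_tree :: "nat \<Rightarrow> (nat \<times> nat) set \<Rightarrow> bool" where
  "bfs_oriented_tree m A \<longleftrightarrow>
     A \<subseteq> {0..m} \<times> {0..m} \<and>
     (\<forall>i j. (i, j) \<in> A \<longrightarrow> (j, i) \<notin> A) \<and>
     (\<forall>j\<in>{1..m}. \<exists>!i. i < j \<and> ((i, j) \<in> A \<or> (j, i) \<in> A)) \<and>
     (\<forall>(i, j)\<in>A. (i < j \<and> i = tree_parent A j) \<or> (j < i \<and> j = tree_parent A i)) \<and>
     (\<forall>j\<in>{1..m}. \<forall>k\<in>{1..m}. j \<le> k \<longrightarrow> tree_parent A j \<le> tree_parent A k)"

definition tree_degree :: "(nat \<times> nat) set \<Rightarrow> nat \<Rightarrow> nat" where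
  "tree_degree A i = card {j. (i, j) \<in> A \<or> (j, i) \<in> A}"

(* conditional probability that R_j = f j given R_(parent j) = f (parent j) *)
definition rt_weight ::
  "(nat \<times> nat) set \<Rightarrow> (nat \<Rightarrow> nat \<Rightarrow> real) \<Rightarrow> (nat \<times> nat) set \<Rightarrow> (nat \<Rightarrow> nat) \<Rightarrow> nat \<Rightarrow> real" where
  "rt_weight E x A f j =
     (let i = tree_parent A j in
      if (i, j) \<in> A then (if (f i, f j) \<in> E then x (f i) (f j) else 0)
      else (if (f j, f i) \<in> E then x (f j) (f i) else 0))"

(* Probability that the random tree R = (R_0,...,R_m) in G according to T (arcs A) and x,
   with R_0 = v0, satisfies the property P.  The law of R is the product of the
   conditional transition probabilities. *)
definition random_tree_prob ::
  "nat set \<Rightarrow> (nat \<times> nat) set \<Rightarrow> (nat \<Rightarrow> nat \<Rightarrow> real) \<Rightarrow> nat \<Rightarrow> (nat \<times> nat) set \<Rightarrow> nat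
    \<Rightarrow> ((nat \<Rightarrow> nat) \<Rightarrow> bool) \<Rightarrow> real" where
  "random_tree_prob V E x m A v0 P =
     (\<Sum>f\<in>{f \<in> {0..m} \<rightarrow>\<^sub>E V. f 0 = v0 \<and> P f}. \<Prod>j\<in>{1..m}. rt_weight E x A f j)"

definition self_avoiding :: "nat \<Rightarrow> (nat \<Rightarrow> nat) \<Rightarrow> bool" where
  "self_avoiding m f \<longleftrightarrow> inj_on f {0..m}"

definition sets_expected :: "nat \<Rightarrow> nat set set \<Rightarrow> real \<Rightarrow> nat set \<Rightarrow> bool" where
  "sets_expected n \<S> a M \<longleftrightarrow>
     (\<forall>S\<in>\<S>. \<bar>real (card (M \<inter> S)) - real (card M) / real n * real (card S)\<bar> < a)"

definition c_expected ::
  "nat \<Rightarrow> nat set \<Rightarrow> (nat \<times> nat) set \<Rightarrow> (nat \<Rightarrow> nat \<Rightarrow> real) \<Rightarrow> real \<Rightarrow> nat set \<Rightarrow> bool" where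
  "c_expected n V E x c M \<longleftrightarrow>
     (\<forall>v\<in>V.
        \<bar>(\<Sum>w\<in>out_nbrs E v \<inter> M. x v w) - real (card M) / real n\<bar> < c \<and>
        \<bar>(\<Sum>w\<in>out_nbrs E v \<inter> M. x v w * log 2 (1 / x v w)) - real (card M) / real n * h_out E x v\<bar> < c \<and>
        \<bar>(\<Sum>w\<in>in_nbrs E v \<inter> M. x w v) - real (card M) / real n\<bar> < c \<and>
        \<bar>(\<Sum>w\<in>in_nbrs E v \<inter> M. x w v * log 2 (1 / x w v)) - real (card M) / real n * h_in E x v\<bar> < c)"

definition S_a_c_expected ::
  "nat \<Rightarrow> nat set \<Rightarrow> (nat \<times> nat) set \<Rightarrow> (nat \<Rightarrow> nat \<Rightarrow> real) \<Rightarrow> nat set set \<Rightarrow> real \<Rightarrow> real \<Rightarrow> nat set \<Rightarrow> bool" where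
  "S_a_c_expected n V E x \<S> a c M \<longleftrightarrow> sets_expected n \<S> a M \<and> c_expected n V E x c M"

end

theory Submission
  imports Defs "HOL-Analysis.Analysis" "HOL-Real_Asymp.Real_Asymp"
begin


locale rt =
  fixes V :: "nat set" and K :: "nat \<Rightarrow> nat \<Rightarrow> nat \<Rightarrow> real" and p :: "nat \<Rightarrow> nat"
    and m :: nat and v0 :: nat
  assumes finV: "finite V" and v0V: "v0 \<in> V"
    and p_lt: "\<And>j. 1 \<le> j \<Longrightarrow> j \<le> m \<Longrightarrow> p j < j"
    and K_nonneg: "\<And>j u w. 1 \<le> j \<Longrightarrow> j \<le> m \<Longrightarrow> u \<in> V \<Longrightarrow> w \<in> V \<Longrightarrow> 0 \<le> K j u w"
    and K_row: "\<And>j u. 1 \<le> j \<Longrightarrow> j \<le> m \<Longrightarrow> u \<in> V \<Longrightarrow> (\<Sum>w\<in>V. K j u w) = 1"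
begin

definition Om :: "nat \<Rightarrow> (nat \<Rightarrow> nat) set" where
  "Om k = {f \<in> {0..k} \<rightarrow>\<^sub>E V. f 0 = v0}"
definition W :: "nat \<Rightarrow> (nat \<Rightarrow> nat) \<Rightarrow> real" where
  "W k f = (\<Prod>j\<in>{1..k}. K j (f (p j)) (f j))"
definition T :: "nat \<Rightarrow> (nat \<Rightarrow> nat \<Rightarrow> real) \<Rightarrow> real" where
  "T k \<psi> = (\<Sum>f\<in>Om k. W k f * (\<Prod>j\<in>{0..k}. \<psi> j (f j)))"
definition KK :: "nat \<Rightarrow> (nat \<Rightarrow> real) \<Rightarrow> nat \<Rightarrow> real" where
  "KK j \<phi> u = (\<Sum>w\<in>V. K j u w * \<phi> w)"

lemma finite_Om: "finite (Om k)"
  proof -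
  have "finite ({0..k} \<rightarrow>\<^sub>E V)" using finV by (intro finite_PiE) auto
  then show ?thesis unfolding Om_def by (rule finite_subset[rotated]) auto
qed

lemma Om_V: "f \<in> Om k \<Longrightarrow> j \<le> k \<Longrightarrow> f j \<in> V"
  unfolding Om_def by auto

lemma W_nonneg: "k \<le> m \<Longrightarrow> f \<in> Om k \<Longrightarrow> 0 \<le> W k f"
  unfolding W_def
proof (rule prod_nonneg)
  fix j assume "k \<le> m" "f \<in> Om k" "j \<in> {1..k}"
  then show "0 \<le> K j (f (p j)) (f j)"
    using p_lt[of j] by (intro K_nonneg) (auto intro: Om_V)
qed

lemma Om_Suc: "Om (Suc k) = (\<lambda>(y,g). g(Suc k := y)) ` (V \<times> Om k)"
proof -
  have e: "{0..Suc k} = insert (Suc k) {0..k}" by auto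
  have "{0..Suc k} \<rightarrow>\<^sub>E V = (\<lambda>(y,g). g(Suc k := y)) ` (V \<times> ({0..k} \<rightarrow>\<^sub>E V))"
    unfolding e by (rule PiE_insert_eq)
  then show ?thesis
    unfolding Om_def by (auto simp: image_iff)
qed

lemma inj_Suc: "inj_on (\<lambda>(y,g). g(Suc k := y)) (V \<times> Om k)"
proof -
  have "inj_on (\<lambda>(y,g). g(Suc k := y)) (V \<times> ({0..k} \<rightarrow>\<^sub>E V))"
    using inj_combinator[of "Suc k" "{0..k}" "\<lambda>_. V"] by auto
  then show ?thesis
    by (rule inj_on_subset) (auto simp: Om_def)
qed

lemma sum_Om_Suc: "(\<Sum>f\<in>Om (Suc k). F f) = (\<Sum>g\<in>Om k. \<Sum>y\<in>V. F (g(Suc k := y)))"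
proof -
  have "(\<Sum>f\<in>Om (Suc k). F f) = (\<Sum>(y,g)\<in>V \<times> Om k. F (g(Suc k := y)))"
    unfolding Om_Suc by (subst sum.reindex[OF inj_Suc]) (simp add: case_prod_unfold)
  also have "\<dots> = (\<Sum>y\<in>V. \<Sum>g\<in>Om k. F (g(Suc k := y)))"
    by (rule sum.cartesian_product[symmetric])
  also have "\<dots> = (\<Sum>g\<in>Om k. \<Sum>y\<in>V. F (g(Suc k := y)))"
    by (rule sum.swap)
  finally show ?thesis .
qed

lemma W_Suc:
  assumes "Suc k \<le> m" "g \<in> Om k"
  shows "W (Suc k) (g(Suc k := y)) = W k g * K (Suc k) (g (p (Suc k))) y"
proof -
  have ps: "p (Suc k) < Suc k" using p_lt assms by auto
  have "W (Suc k) (g(Suc k := y)) = (\<Prod>j\<in>{1..k}. K j ((g(Suc k := y)) (p j)) ((g(Suc k := y)) j)) * K (Suc k) (g (p (Suc k))) y"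
    unfolding W_def using ps by (simp add: prod.cl_ivl_Suc)
  also have "(\<Prod>j\<in>{1..k}. K j ((g(Suc k := y)) (p j)) ((g(Suc k := y)) j)) = W k g"
    unfolding W_def
  proof (rule prod.cong)
    fix j assume "j \<in> {1..k}"
    then have "p j < j" "j \<le> k" using p_lt[of j] assms by auto
    then show "K j ((g(Suc k := y)) (p j)) ((g(Suc k := y)) j) = K j (g (p j)) (g j)" by simp
  qed simp
  finally show ?thesis .
qed

lemma T_Suc:
  assumes "Suc k \<le> m"
  shows "T (Suc k) \<psi> = T k (\<psi>(p (Suc k) := (\<lambda>u. \<psi> (p (Suc k)) u * KK (Suc k) (\<psi> (Suc k)) u)))"
proof -
  let ?i = "p (Suc k)"
  have ik: "?i \<le> k" using p_lt[of "Suc k"] assms by auto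
  let ?\<psi>' = "\<psi>(?i := (\<lambda>u. \<psi> ?i u * KK (Suc k) (\<psi> (Suc k)) u))"
  have "T (Suc k) \<psi> = (\<Sum>g\<in>Om k. \<Sum>y\<in>V. W (Suc k) (g(Suc k := y)) * (\<Prod>j\<in>{0..Suc k}. \<psi> j ((g(Suc k := y)) j)))"
    unfolding T_def by (rule sum_Om_Suc)
  also have "\<dots> = (\<Sum>g\<in>Om k. W k g * (\<Prod>j\<in>{0..k}. ?\<psi>' j (g j)))"
  proof (rule sum.cong)
    fix g assume g: "g \<in> Om k"
    have pr: "(\<Prod>j\<in>{0..Suc k}. \<psi> j ((g(Suc k := y)) j)) = (\<Prod>j\<in>{0..k}. \<psi> j (g j)) * \<psi> (Suc k) y" for y
    proof -
      have "(\<Prod>j\<in>{0..Suc k}. \<psi> j ((g(Suc k := y)) j)) = (\<Prod>j\<in>{0..k}. \<psi> j ((g(Suc k := y)) j)) * \<psi> (Suc k) y"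
        by (simp add: prod.cl_ivl_Suc)
      also have "(\<Prod>j\<in>{0..k}. \<psi> j ((g(Suc k := y)) j)) = (\<Prod>j\<in>{0..k}. \<psi> j (g j))"
        by (rule prod.cong) auto
      finally show ?thesis .
    qed
    have "(\<Sum>y\<in>V. W (Suc k) (g(Suc k := y)) * (\<Prod>j\<in>{0..Suc k}. \<psi> j ((g(Suc k := y)) j)))
        = (\<Sum>y\<in>V. W k g * (\<Prod>j\<in>{0..k}. \<psi> j (g j)) * (K (Suc k) (g ?i) y * \<psi> (Suc k) y))"
      by (intro sum.cong refl) (simp add: W_Suc[OF assms g] pr mult_ac)
    also have "\<dots> = W k g * (\<Prod>j\<in>{0..k}. \<psi> j (g j)) * KK (Suc k) (\<psi> (Suc k)) (g ?i)"
      unfolding KK_def by (simp only: sum_distrib_left)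
    also have "\<dots> = W k g * (\<Prod>j\<in>{0..k}. ?\<psi>' j (g j))"
    proof -
      have "(\<Prod>j\<in>{0..k}. ?\<psi>' j (g j)) = ?\<psi>' ?i (g ?i) * (\<Prod>j\<in>{0..k}-{?i}. ?\<psi>' j (g j))"
        using ik by (intro prod.remove) auto
      also have "(\<Prod>j\<in>{0..k}-{?i}. ?\<psi>' j (g j)) = (\<Prod>j\<in>{0..k}-{?i}. \<psi> j (g j))"
        by (rule prod.cong) auto
      finally have a: "(\<Prod>j\<in>{0..k}. ?\<psi>' j (g j)) = \<psi> ?i (g ?i) * KK (Suc k) (\<psi> (Suc k)) (g ?i) * (\<Prod>j\<in>{0..k}-{?i}. \<psi> j (g j))"
        by simp
      have b: "(\<Prod>j\<in>{0..k}. \<psi> j (g j)) = \<psi> ?i (g ?i) * (\<Prod>j\<in>{0..k}-{?i}. \<psi> j (g j))"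
        using ik by (intro prod.remove) auto
      show ?thesis unfolding a b by (simp only: mult_ac)
    qed
    finally show "(\<Sum>y\<in>V. W (Suc k) (g(Suc k := y)) * (\<Prod>j\<in>{0..Suc k}. \<psi> j ((g(Suc k := y)) j)))
        = W k g * (\<Prod>j\<in>{0..k}. ?\<psi>' j (g j))" .
  qed simp
  finally show ?thesis unfolding T_def .
qed

lemma Om_0: "Om 0 = {(\<lambda>j. undefined)(0 := v0)}"
  unfolding Om_def using v0V by (auto simp: PiE_def extensional_def fun_eq_iff)

lemma T_0: "T 0 \<psi> = \<psi> 0 v0"
  unfolding T_def Om_0 W_def by simp

lemma T_cong: "(\<And>j w. j \<le> k \<Longrightarrow> w \<in> V \<Longrightarrow> \<psi> j w = \<psi>' j w) \<Longrightarrow> T k \<psi> = T k \<psi>'"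
  unfolding T_def by (intro sum.cong refl arg_cong2[where f="(*)"] prod.cong) (auto intro: Om_V)

lemma T_mono:
  assumes "k \<le> m" "\<And>j w. j \<le> k \<Longrightarrow> w \<in> V \<Longrightarrow> 0 \<le> \<psi> j w \<and> \<psi> j w \<le> \<psi>' j w"
  shows "T k \<psi> \<le> T k \<psi>'"
  unfolding T_def
proof (rule sum_mono)
  fix f assume f: "f \<in> Om k"
  have "(\<Prod>j\<in>{0..k}. \<psi> j (f j)) \<le> (\<Prod>j\<in>{0..k}. \<psi>' j (f j))"
    by (rule prod_mono) (use assms f Om_V in auto)
  then show "W k f * (\<Prod>j\<in>{0..k}. \<psi> j (f j)) \<le> W k f * (\<Prod>j\<in>{0..k}. \<psi>' j (f j))"
    using W_nonneg[OF assms(1) f] by (rule mult_left_mono)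
qed

lemma T_nonneg:
  assumes "k \<le> m" "\<And>j w. j \<le> k \<Longrightarrow> w \<in> V \<Longrightarrow> 0 \<le> \<psi> j w"
  shows "0 \<le> T k \<psi>"
  unfolding T_def using assms W_nonneg Om_V
  by (intro sum_nonneg mult_nonneg_nonneg prod_nonneg) auto

lemma T_scale:
  assumes "i \<le> k"
  shows "T k (\<psi>(i := (\<lambda>w. c * \<psi> i w))) = c * T k \<psi>"
  unfolding T_def sum_distrib_left
proof (rule sum.cong)
  fix f assume "f \<in> Om k"
  let ?\<psi>' = "\<psi>(i := (\<lambda>w. c * \<psi> i w))"
  have "(\<Prod>j\<in>{0..k}. ?\<psi>' j (f j)) = ?\<psi>' i (f i) * (\<Prod>j\<in>{0..k}-{i}. ?\<psi>' j (f j))"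
    using assms by (intro prod.remove) auto
  also have "(\<Prod>j\<in>{0..k}-{i}. ?\<psi>' j (f j)) = (\<Prod>j\<in>{0..k}-{i}. \<psi> j (f j))"
    by (rule prod.cong) auto
  also have "(\<Prod>j\<in>{0..k}. \<psi> j (f j)) = \<psi> i (f i) * (\<Prod>j\<in>{0..k}-{i}. \<psi> j (f j))"
    using assms by (intro prod.remove) auto
  ultimately show "W k f * (\<Prod>j\<in>{0..k}. ?\<psi>' j (f j)) = c * (W k f * (\<Prod>j\<in>{0..k}. \<psi> j (f j)))"
    by simp
qed simp

lemma T_sum:
  assumes "i \<le> k" "finite I"
  shows "(\<Sum>v\<in>I. T k (\<psi>(i := \<phi> v))) = T k (\<psi>(i := (\<lambda>w. \<Sum>v\<in>I. \<phi> v w)))"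
proof -
  have r: "(\<Prod>j\<in>{0..k}. (\<psi>(i := g)) j (f j)) = g (f i) * (\<Prod>j\<in>{0..k}-{i}. \<psi> j (f j))" for g f
  proof -
    have "(\<Prod>j\<in>{0..k}. (\<psi>(i := g)) j (f j)) = (\<psi>(i := g)) i (f i) * (\<Prod>j\<in>{0..k}-{i}. (\<psi>(i := g)) j (f j))"
      using assms by (intro prod.remove) auto
    also have "(\<Prod>j\<in>{0..k}-{i}. (\<psi>(i := g)) j (f j)) = (\<Prod>j\<in>{0..k}-{i}. \<psi> j (f j))"
      by (rule prod.cong) auto
    finally show ?thesis by simp
  qed
  show ?thesis
    unfolding T_def r
    by (subst sum.swap) (simp add: sum_distrib_left sum_distrib_right algebra_simps)
qed

lemma KK_const: "1 \<le> j \<Longrightarrow> j \<le> m \<Longrightarrow> u \<in> V \<Longrightarrow> KK j (\<lambda>_. c) u = c"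
  unfolding KK_def using K_row by (simp add: sum_distrib_right[symmetric])

lemma T_one: "k \<le> m \<Longrightarrow> T k (\<lambda>_ _. 1) = 1"
proof (induction k)
  case 0 then show ?case by (simp add: T_0)
next
  case (Suc k)
  have "T (Suc k) (\<lambda>_ _. 1) = T k ((\<lambda>_ _. 1)(p (Suc k) := (\<lambda>u. 1 * KK (Suc k) (\<lambda>_. 1) u)))"
    using Suc.prems by (subst T_Suc) auto
  also have "\<dots> = T k (\<lambda>_ _. 1)"
    using Suc.prems by (intro T_cong) (auto simp: KK_const)
  finally show ?case using Suc by simp
qed


definition Pr :: "((nat \<Rightarrow> nat) \<Rightarrow> bool) \<Rightarrow> real" where
  "Pr P = (\<Sum>f\<in>Om m. W m f * (if P f then 1 else 0))"

lemma Pr_nonneg: "0 \<le> Pr P"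
  unfolding Pr_def using W_nonneg by (intro sum_nonneg) auto

lemma Pr_True: "Pr (\<lambda>_. True) = 1"
  using T_one[of m] unfolding Pr_def T_def by simp

lemma Pr_compl: "Pr (\<lambda>f. \<not> P f) = 1 - Pr P"
proof -
  have "Pr (\<lambda>f. \<not> P f) + Pr P = Pr (\<lambda>_. True)"
    unfolding Pr_def sum.distrib[symmetric] by (intro sum.cong) auto
  then show ?thesis using Pr_True by simp
qed

lemma Pr_mono: "(\<And>f. f \<in> Om m \<Longrightarrow> P f \<Longrightarrow> Q f) \<Longrightarrow> Pr P \<le> Pr Q"
  unfolding Pr_def using W_nonneg by (intro sum_mono) auto

lemma Pr_disj: "Pr (\<lambda>f. P f \<or> Q f) \<le> Pr P + Pr Q"
  unfolding Pr_def sum.distrib[symmetric] using W_nonneg by (intro sum_mono) auto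

lemma Pr_False: "Pr (\<lambda>_. False) = 0"
  unfolding Pr_def by simp

lemma Pr_Ex: "finite I \<Longrightarrow> Pr (\<lambda>f. \<exists>i\<in>I. P i f) \<le> (\<Sum>i\<in>I. Pr (P i))"
proof (induction I rule: finite_induct)
  case empty then show ?case by (simp add: Pr_False)
next
  case (insert a I)
  have "Pr (\<lambda>f. \<exists>i\<in>insert a I. P i f) = Pr (\<lambda>f. P a f \<or> (\<exists>i\<in>I. P i f))"
    by simp
  also have "\<dots> \<le> Pr (P a) + Pr (\<lambda>f. \<exists>i\<in>I. P i f)" by (rule Pr_disj)
  also have "\<dots> \<le> Pr (P a) + (\<Sum>i\<in>I. Pr (P i))" using insert by simp
  finally show ?case using insert by simp
qed

lemma T_tail:
  assumes "k' \<le> k" "k \<le> m" "\<And>l w. k' < l \<Longrightarrow> l \<le> k \<Longrightarrow> w \<in> V \<Longrightarrow> \<psi> l w = 1"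
  shows "T k \<psi> = T k' \<psi>"
  using assms
proof (induction k)
  case 0 then show ?case by simp
next
  case (Suc k)
  show ?case
  proof (cases "k' = Suc k")
    case True then show ?thesis by simp
  next
    case False
    then have kk: "k' \<le> k" using Suc by simp
    have "T (Suc k) \<psi> = T k (\<psi>(p (Suc k) := (\<lambda>u. \<psi> (p (Suc k)) u * KK (Suc k) (\<psi> (Suc k)) u)))"
      using Suc.prems by (intro T_Suc) auto
    also have "\<dots> = T k \<psi>"
    proof (rule T_cong)
      fix j w assume "j \<le> k" "w \<in> V"
      have "KK (Suc k) (\<psi> (Suc k)) w = KK (Suc k) (\<lambda>_. 1) w"
        unfolding KK_def using Suc.prems kk by (intro sum.cong) auto
      also have "\<dots> = 1" using Suc.prems \<open>w \<in> V\<close> by (intro KK_const) auto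
      finally show "(\<psi>(p (Suc k) := (\<lambda>u. \<psi> (p (Suc k)) u * KK (Suc k) (\<psi> (Suc k)) u))) j w = \<psi> j w"
        by simp
    qed
    also have "\<dots> = T k' \<psi>" using Suc kk by auto
    finally show ?thesis .
  qed
qed

lemma Pr_eq_sum_T:
  assumes "i < j" "j \<le> m"
  shows "Pr (\<lambda>f. f i = f j) = (\<Sum>v\<in>V. T m (\<lambda>l w. if l = i \<or> l = j then (if w = v then 1 else 0) else 1))"
proof -
  have "Pr (\<lambda>f. f i = f j) = (\<Sum>f\<in>Om m. \<Sum>v\<in>V. W m f * (\<Prod>l\<in>{0..m}. (if l = i \<or> l = j then (if f l = v then 1 else 0) else 1)))"
    unfolding Pr_def
  proof (rule sum.cong)
    fix f assume f: "f \<in> Om m"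
    have fi: "f i \<in> V" using f assms by (intro Om_V) auto
    have ij2: "{0..m} \<inter> {l. l = i \<or> l = j} = {i, j}" using assms by auto
    have e: "(\<Prod>l\<in>{0..m}. (if l = i \<or> l = j then (if f l = v then 1 else 0) else 1::real))
        = (if f i = v then 1 else 0) * (if f j = v then 1 else 0)" for v
      using assms by (subst prod.If_cases) (auto simp: ij2)
    have "(\<Sum>v\<in>V. (if f i = v then 1 else 0) * (if f j = v then 1 else (0::real))) = (if f i = f j then 1 else 0)"
      using fi finV by (simp add: mult_ac if_distrib[of "\<lambda>x. x * _"] sum.delta' cong: if_cong) 
    then show "W m f * (if f i = f j then 1 else 0) = (\<Sum>v\<in>V. W m f * (\<Prod>l\<in>{0..m}. (if l = i \<or> l = j then (if f l = v then 1 else 0) else 1)))"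
      unfolding e sum_distrib_left[symmetric] by simp
  qed simp
  also have "\<dots> = (\<Sum>v\<in>V. T m (\<lambda>l w. if l = i \<or> l = j then (if w = v then 1 else 0) else 1))"
    unfolding T_def by (rule sum.swap)
  finally show ?thesis .
qed

lemma pair_bound:
  assumes Kle: "\<And>j u w. 1 \<le> j \<Longrightarrow> j \<le> m \<Longrightarrow> u \<in> V \<Longrightarrow> w \<in> V \<Longrightarrow> K j u w \<le> c"
    and ij: "i < j" "j \<le> m"
  shows "Pr (\<lambda>f. f i = f j) \<le> c"
proof -
  obtain j' where j': "j = Suc j'" using ij by (cases j) auto
  define \<psi> where "\<psi> (v::nat) = (\<lambda>(l::nat) (w::nat). if l = i \<or> l = j then (if w = v then 1 else 0) else (1::real))" for v
  define ch where "ch (v::nat) = (\<lambda>(l::nat) (w::nat). if l = i then (if w = v then 1 else 0) else (1::real))" for v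
  have c0: "0 \<le> c" using Kle[of j v0 v0] K_nonneg[of j v0 v0] ij v0V by auto
  have step: "T m (\<psi> v) \<le> c * T j' (ch v)" if v: "v \<in> V" for v
  proof -
    have "T m (\<psi> v) = T j (\<psi> v)"
      using ij by (intro T_tail) (auto simp: \<psi>_def)
    also have "\<dots> = T j' ((\<psi> v)(p j := (\<lambda>u. \<psi> v (p j) u * KK j (\<psi> v j) u)))"
      unfolding j' using ij j' by (intro T_Suc) auto
    also have "\<dots> \<le> T j' ((ch v)(p j := (\<lambda>u. c * ch v (p j) u)))"
    proof (rule T_mono)
      show "j' \<le> m" using ij j' by simp
      fix l w assume l: "l \<le> j'" and w: "w \<in> V"
      have pj: "p j < j" using p_lt ij by auto
      have KKv: "KK j (\<psi> v j) w = K j w v"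
        unfolding KK_def \<psi>_def using v finV by (simp add: if_distrib[of "\<lambda>x. _ * x"] sum.delta' cong: if_cong)
      have Kn: "0 \<le> K j w v" "K j w v \<le> c" using K_nonneg[of j w v] Kle[of j w v] ij v w by auto
      have "\<psi> v (p j) w = ch v (p j) w" using pj j' unfolding \<psi>_def ch_def by auto
      moreover have "\<psi> v l w = ch v l w" using l j' unfolding \<psi>_def ch_def by auto
      moreover have "0 \<le> ch v l w" "ch v l w \<le> 1" unfolding ch_def by auto
      moreover have "0 \<le> ch v (p j) w" "ch v (p j) w \<le> 1" unfolding ch_def by auto
      ultimately show "0 \<le> ((\<psi> v)(p j := (\<lambda>u. \<psi> v (p j) u * KK j (\<psi> v j) u))) l w \<and>
          ((\<psi> v)(p j := (\<lambda>u. \<psi> v (p j) u * KK j (\<psi> v j) u))) l w \<le> ((ch v)(p j := (\<lambda>u. c * ch v (p j) u))) l w"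
        using KKv Kn c0 by (auto simp: mult_mono mult_right_mono mult.commute)
    qed
    also have "\<dots> = c * T j' (ch v)"
      using p_lt[of j] ij j' by (intro T_scale) auto
    finally show ?thesis .
  qed
  have "Pr (\<lambda>f. f i = f j) = (\<Sum>v\<in>V. T m (\<psi> v))"
    unfolding Pr_eq_sum_T[OF ij] \<psi>_def ..
  also have "\<dots> \<le> (\<Sum>v\<in>V. c * T j' (ch v))" using step by (rule sum_mono)
  also have "(\<Sum>v\<in>V. T j' (ch v)) = 1"
  proof -
    have "(\<Sum>v\<in>V. T j' (ch v)) = (\<Sum>v\<in>V. T j' ((\<lambda>_ _. 1)(i := (\<lambda>w. if w = v then 1 else 0))))"
      unfolding ch_def by (intro sum.cong refl T_cong) auto
    also have "\<dots> = T j' ((\<lambda>_ _. 1)(i := (\<lambda>w. \<Sum>v\<in>V. if w = v then 1 else 0)))"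
      using ij j' finV by (intro T_sum) auto
    also have "\<dots> = T j' (\<lambda>_ _. 1)"
      using finV by (intro T_cong) auto
    also have "\<dots> = 1" using ij j' by (intro T_one) auto
    finally show ?thesis .
  qed
  then have "(\<Sum>v\<in>V. c * T j' (ch v)) = c" by (simp add: sum_distrib_left[symmetric])
  finally show ?thesis .
qed

lemma SA_bound:
  assumes Kle: "\<And>j u w. 1 \<le> j \<Longrightarrow> j \<le> m \<Longrightarrow> u \<in> V \<Longrightarrow> w \<in> V \<Longrightarrow> K j u w \<le> c"
  shows "Pr (\<lambda>f. \<not> inj_on f {0..m}) \<le> real m ^ 2 * c"
proof -
  have c0: "0 \<le> c" if "1 \<le> m" using Kle[of 1 v0 v0] K_nonneg[of 1 v0 v0] that v0V by auto
  have "Pr (\<lambda>f. \<not> inj_on f {0..m}) \<le> Pr (\<lambda>f. \<exists>j\<in>{1..m}. \<exists>i\<in>{0..<j}. f i = f j)"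
  proof (rule Pr_mono)
    fix f assume "\<not> inj_on f {0..m}"
    then obtain a b where ab: "a \<in> {0..m}" "b \<in> {0..m}" "a \<noteq> b" "f a = f b" unfolding inj_on_def by auto
    show "\<exists>j\<in>{1..m}. \<exists>i\<in>{0..<j}. f i = f j"
    proof (cases "a < b")
      case True then show ?thesis using ab by (intro bexI[of _ b] bexI[of _ a]) auto
    next
      case False then show ?thesis using ab by (intro bexI[of _ a] bexI[of _ b]) auto
    qed
  qed
  also have "\<dots> \<le> (\<Sum>j\<in>{1..m}. Pr (\<lambda>f. \<exists>i\<in>{0..<j}. f i = f j))" by (rule Pr_Ex) simp
  also have "\<dots> \<le> (\<Sum>j\<in>{1..m}. \<Sum>i\<in>{0..<j}. Pr (\<lambda>f. f i = f j))"
    by (intro sum_mono Pr_Ex) simp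
  also have "\<dots> \<le> (\<Sum>j\<in>{1..m}. \<Sum>i\<in>{0..<m}. c)"
  proof (intro sum_mono)
    fix j assume j: "j \<in> {1..m}"
    have "(\<Sum>i\<in>{0..<j}. Pr (\<lambda>f. f i = f j)) \<le> (\<Sum>i\<in>{0..<j}. c)"
      using j by (intro sum_mono pair_bound[OF Kle]) auto
    also have "\<dots> \<le> (\<Sum>i\<in>{0..<m}. c)" using j c0 by (simp add: mult_right_mono)
    finally show "(\<Sum>i\<in>{0..<j}. Pr (\<lambda>f. f i = f j)) \<le> (\<Sum>i\<in>{0..<m}. c)" .
  qed
  also have "\<dots> = real m ^ 2 * c" by (simp add: power2_eq_square)
  finally show ?thesis .
qed


definition C :: "nat \<Rightarrow> nat set" where "C j = {c \<in> {1..m}. p c = j \<and> j < c}"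

lemma finite_C: "finite (C j)" unfolding C_def by auto

lemma C_D: "c \<in> C j \<Longrightarrow> j < c \<and> c \<le> m \<and> 1 \<le> c \<and> p c = j" unfolding C_def by auto

lemma C_eq: "C j = {c \<in> {1..m}. p c = j}"
  unfolding C_def using p_lt by auto

lemma sum_C: "(\<Sum>j\<in>{0..m}. \<Sum>c\<in>C j. F c) = (\<Sum>c\<in>{1..m}. F c)"
proof -
  have "p ` {1..m} \<subseteq> {0..m}" using p_lt by force
  then have "(\<Sum>j\<in>{0..m}. sum F {c. c \<in> {1..m} \<and> p c = j}) = sum F {1..m}"
    by (intro sum.group) auto
  then show ?thesis unfolding C_eq by simp
qed

function Hf :: "(nat \<Rightarrow> real) \<Rightarrow> nat \<Rightarrow> nat \<Rightarrow> real" where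
  "Hf h j u = h u + (\<Sum>c\<in>C j. \<Sum>w\<in>V. K c u w * Hf h c w)"
  by auto
termination by (relation "Wellfounded.measure (\<lambda>(h,j,u). m - j)") (auto simp: C_def)

declare Hf.simps[simp del]

lemma Hf_eq: "Hf h j u = h u + (\<Sum>c\<in>C j. KK c (Hf h c) u)"
  unfolding KK_def by (rule Hf.simps)

lemma exp_le_quad: fixes t :: real assumes "\<bar>t\<bar> \<le> 1" shows "exp t \<le> 1 + t + t^2"
proof (cases "0 \<le> t")
  case True then show ?thesis using exp_bound[of t] assms by simp
next
  case False
  define s where "s = - t"
  have s: "0 \<le> s" "s \<le> 1" using False assms by (auto simp: s_def)
  have e: "1 + s + s^2/2 \<le> exp s" using exp_lower_Taylor_quadratic[OF s(1)] .
  have pos: "0 < 1 + s + s^2/2" using s by (simp add: add_pos_nonneg)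
  have "(1 - s + s^2) * (1 + s + s^2/2) \<ge> 1"
  proof -
    have "(1 - s + s^2) * (1 + s + s^2/2) * 2 = 2 + s^2 + s^3 + s^4"
      by (simp add: field_simps eval_nat_numeral)
    moreover have "0 \<le> s^2 + s^3 + s^4" using s by simp
    ultimately show ?thesis by linarith
  qed
  then have "(1 - s + s^2) * exp s \<ge> 1"
    by (smt (verit) e mult_left_mono s(1) s(2) zero_le_power2)
  then have "exp t \<le> 1 - s + s^2"
    unfolding s_def by (simp add: exp_minus field_simps)
  then show ?thesis unfolding s_def by simp
qed

end

locale rt2 = rt +
  fixes \<theta> :: real
  assumes K_col: "\<And>j w. 1 \<le> j \<Longrightarrow> j \<le> m \<Longrightarrow> w \<in> V \<Longrightarrow> (\<Sum>u\<in>V. K j u w) = 1"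
    and overlap: "\<And>j u u'. 1 \<le> j \<Longrightarrow> j \<le> m \<Longrightarrow> u \<in> V \<Longrightarrow> u' \<in> V \<Longrightarrow> \<theta> \<le> (\<Sum>w\<in>V. min (K j u w) (K j u' w))"
    and th0: "0 < \<theta>" and th1: "\<theta> \<le> 1"
begin

function oc :: "nat \<Rightarrow> real" where
  "oc j = 1 + (1 - \<theta>) * (\<Sum>c\<in>C j. oc c)"
  by auto
termination by (relation "Wellfounded.measure (\<lambda>j. m - j)") (auto simp: C_def)

declare oc.simps[simp del]

lemma oc_ge1: "1 \<le> oc j"
proof (induction j rule: oc.induct)
  case (1 j)
  have "0 \<le> (\<Sum>c\<in>C j. oc c)" using 1 by (intro sum_nonneg) force
  then show ?case using th1 by (subst oc.simps) simp
qed

lemma contr: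
  assumes j: "1 \<le> j" "j \<le> m" and u: "u \<in> V" "u' \<in> V"
    and sp: "\<And>w w'. w \<in> V \<Longrightarrow> w' \<in> V \<Longrightarrow> \<phi> w - \<phi> w' \<le> Ob"
  shows "KK j \<phi> u - KK j \<phi> u' \<le> (1 - \<theta>) * Ob"
proof -
  define mn where "mn w = min (K j u w) (K j u' w)" for w
  define s where "s = (\<Sum>w\<in>V. mn w)"
  have Vne: "V \<noteq> {}" using v0V by auto
  define M where "M = Max (\<phi> ` V)"
  define mi where "mi = Min (\<phi> ` V)"
  have M: "\<And>w. w \<in> V \<Longrightarrow> \<phi> w \<le> M" unfolding M_def using finV by auto
  have mi: "\<And>w. w \<in> V \<Longrightarrow> mi \<le> \<phi> w" unfolding mi_def using finV by auto
  have "M \<in> \<phi> ` V" unfolding M_def using finV Vne by (intro Max_in) auto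
  then obtain a where a: "a \<in> V" "\<phi> a = M" by auto
  have "mi \<in> \<phi> ` V" unfolding mi_def using finV Vne by (intro Min_in) auto
  then obtain b where b: "b \<in> V" "\<phi> b = mi" by auto
  have MO: "M - mi \<le> Ob" using sp[OF a(1) b(1)] a b by simp
  have Mmi: "0 \<le> M - mi" using M[OF b(1)] b by simp
  have sth: "\<theta> \<le> s" unfolding s_def mn_def using overlap j u by auto
  have r1: "(\<Sum>w\<in>V. K j u w) = 1" "(\<Sum>w\<in>V. K j u' w) = 1" using K_row j u by auto
  have d1: "(\<Sum>w\<in>V. (K j u w - mn w) * \<phi> w) \<le> (\<Sum>w\<in>V. (K j u w - mn w) * M)"
    by (intro sum_mono mult_left_mono) (auto simp: mn_def M)
  have d2: "(\<Sum>w\<in>V. (K j u' w - mn w) * mi) \<le> (\<Sum>w\<in>V. (K j u' w - mn w) * \<phi> w)"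
    by (intro sum_mono mult_left_mono) (auto simp: mn_def mi)
  have "KK j \<phi> u - KK j \<phi> u' = (\<Sum>w\<in>V. (K j u w - mn w) * \<phi> w) - (\<Sum>w\<in>V. (K j u' w - mn w) * \<phi> w)"
    unfolding KK_def by (simp add: sum_subtractf[symmetric] algebra_simps)
  also have "\<dots> \<le> (\<Sum>w\<in>V. (K j u w - mn w) * M) - (\<Sum>w\<in>V. (K j u' w - mn w) * mi)"
    using d1 d2 by simp
  also have "\<dots> = (1 - s) * (M - mi)"
    unfolding sum_distrib_right[symmetric] sum_subtractf s_def r1 by (simp add: algebra_simps)
  also have "\<dots> \<le> (1 - \<theta>) * (M - mi)" using sth Mmi by (intro mult_right_mono) auto
  also have "\<dots> \<le> (1 - \<theta>) * Ob" using th1 MO by (intro mult_left_mono) auto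
  finally show ?thesis .
qed

lemma mgf1:
  assumes j: "1 \<le> j" "j \<le> m" and u: "u \<in> V"
    and sp: "\<And>w w'. w \<in> V \<Longrightarrow> w' \<in> V \<Longrightarrow> \<phi> w - \<phi> w' \<le> Ob"
    and lO: "\<bar>l\<bar> * Ob \<le> 1"
  shows "KK j (\<lambda>w. exp (l * \<phi> w)) u \<le> exp (l * KK j \<phi> u + l^2 * Ob^2)"
proof -
  define c where "c = KK j \<phi> u"
  have r1: "(\<Sum>w\<in>V. K j u w) = 1" using K_row j u by auto
  have Kn: "\<And>w. w \<in> V \<Longrightarrow> 0 \<le> K j u w" using K_nonneg j u by auto
  have dev: "\<bar>\<phi> w - c\<bar> \<le> Ob" if w: "w \<in> V" for w
  proof -
    have "(\<Sum>w'\<in>V. K j u w' * (\<phi> w - \<phi> w')) = \<phi> w * (\<Sum>w'\<in>V. K j u w') - (\<Sum>w'\<in>V. K j u w' * \<phi> w')"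
      by (simp add: algebra_simps sum_subtractf sum_distrib_left)
    then have "\<phi> w - c = (\<Sum>w'\<in>V. K j u w' * (\<phi> w - \<phi> w'))"
      unfolding c_def KK_def r1 by simp
    also have "\<dots> \<le> (\<Sum>w'\<in>V. K j u w' * Ob)" using sp w Kn by (intro sum_mono mult_left_mono) auto
    finally have 1: "\<phi> w - c \<le> Ob" by (simp add: sum_distrib_right[symmetric] r1)
    have "(\<Sum>w'\<in>V. K j u w' * (\<phi> w' - \<phi> w)) = (\<Sum>w'\<in>V. K j u w' * \<phi> w') - \<phi> w * (\<Sum>w'\<in>V. K j u w')"
      by (simp add: algebra_simps sum_subtractf sum_distrib_left)
    then have "c - \<phi> w = (\<Sum>w'\<in>V. K j u w' * (\<phi> w' - \<phi> w))"
      unfolding c_def KK_def r1 by simp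
    also have "\<dots> \<le> (\<Sum>w'\<in>V. K j u w' * Ob)" using sp w Kn by (intro sum_mono mult_left_mono) auto
    finally have 2: "c - \<phi> w \<le> Ob" by (simp add: sum_distrib_right[symmetric] r1)
    show ?thesis using 1 2 by simp
  qed
  have tb: "\<bar>l * (\<phi> w - c)\<bar> \<le> 1" if "w \<in> V" for w
  proof -
    have "\<bar>l * (\<phi> w - c)\<bar> = \<bar>l\<bar> * \<bar>\<phi> w - c\<bar>" by (simp add: abs_mult)
    also have "\<dots> \<le> \<bar>l\<bar> * Ob" using dev[OF that] by (intro mult_left_mono) auto
    finally show ?thesis using lO by simp
  qed
  have sq: "(l * (\<phi> w - c))^2 \<le> l^2 * Ob^2" if "w \<in> V" for w
  proof -
    have "(l * (\<phi> w - c))^2 = (\<bar>l\<bar> * \<bar>\<phi> w - c\<bar>)^2" by (simp add: power_mult_distrib)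
    also have "\<dots> \<le> (\<bar>l\<bar> * Ob)^2" using dev[OF that] by (intro power_mono mult_left_mono) auto
    finally show ?thesis by (simp add: power_mult_distrib)
  qed
  have "KK j (\<lambda>w. exp (l * \<phi> w)) u = exp (l * c) * (\<Sum>w\<in>V. K j u w * exp (l * (\<phi> w - c)))"
    unfolding KK_def sum_distrib_left
    by (intro sum.cong refl) (simp add: algebra_simps exp_diff)
  also have "\<dots> \<le> exp (l * c) * (\<Sum>w\<in>V. K j u w * (1 + l * (\<phi> w - c) + l^2 * Ob^2))"
  proof (rule mult_left_mono)
    show "(\<Sum>w\<in>V. K j u w * exp (l * (\<phi> w - c))) \<le> (\<Sum>w\<in>V. K j u w * (1 + l * (\<phi> w - c) + l^2 * Ob^2))"
    proof (rule sum_mono)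
      fix w assume w: "w \<in> V"
      have "exp (l * (\<phi> w - c)) \<le> 1 + l * (\<phi> w - c) + (l * (\<phi> w - c))^2" using tb[OF w] by (rule exp_le_quad)
      also have "\<dots> \<le> 1 + l * (\<phi> w - c) + l^2 * Ob^2" using sq[OF w] by simp
      finally show "K j u w * exp (l * (\<phi> w - c)) \<le> K j u w * (1 + l * (\<phi> w - c) + l^2 * Ob^2)"
        using Kn[OF w] by (intro mult_left_mono)
    qed
  qed simp
  also have "(\<Sum>w\<in>V. K j u w * (1 + l * (\<phi> w - c) + l^2 * Ob^2)) = 1 + l^2 * Ob^2"
  proof -
    have "(\<Sum>w\<in>V. K j u w * (1 + l * (\<phi> w - c) + l^2 * Ob^2))
       = (\<Sum>w\<in>V. K j u w) * (1 + l^2 * Ob^2) + l * ((\<Sum>w\<in>V. K j u w * \<phi> w) - c * (\<Sum>w\<in>V. K j u w))"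
      by (simp add: algebra_simps sum.distrib sum_subtractf sum_distrib_left sum_distrib_right)
    also have "(\<Sum>w\<in>V. K j u w * \<phi> w) = c" unfolding c_def KK_def ..
    finally show ?thesis using r1 by simp
  qed
  also have "exp (l * c) * (1 + l^2 * Ob^2) \<le> exp (l * c) * exp (l^2 * Ob^2)"
    by (intro mult_left_mono) (auto simp: exp_ge_add_one_self)
  also have "\<dots> = exp (l * KK j \<phi> u + l^2 * Ob^2)" unfolding c_def by (simp add: exp_add)
  finally show ?thesis .
qed

lemma Hf_spread:
  assumes hs: "\<And>u u'. u \<in> V \<Longrightarrow> u' \<in> V \<Longrightarrow> h u - h u' \<le> 1"
  shows "u \<in> V \<Longrightarrow> u' \<in> V \<Longrightarrow> Hf h j u - Hf h j u' \<le> oc j"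
proof (induction j arbitrary: u u' rule: oc.induct)
  case (1 j)
  have "Hf h j u - Hf h j u' = (h u - h u') + (\<Sum>c\<in>C j. KK c (Hf h c) u - KK c (Hf h c) u')"
    by (simp add: Hf_eq[of h j u] Hf_eq[of h j u'] sum_subtractf)
  also have "\<dots> \<le> 1 + (\<Sum>c\<in>C j. (1 - \<theta>) * oc c)"
  proof (intro add_mono sum_mono)
    show "h u - h u' \<le> 1" using hs 1 by auto
    fix c assume c: "c \<in> C j"
    show "KK c (Hf h c) u - KK c (Hf h c) u' \<le> (1 - \<theta>) * oc c"
      using C_D[OF c] 1 c by (intro contr) auto
  qed
  also have "\<dots> = oc j" by (subst oc.simps[of j]) (simp add: sum_distrib_left)
  finally show ?case .
qed

lemma Hf_mean:
  assumes h0: "(\<Sum>u\<in>V. h u) = 0"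
  shows "(\<Sum>u\<in>V. Hf h j u) = 0"
proof (induction j rule: oc.induct)
  case (1 j)
  have "(\<Sum>u\<in>V. Hf h j u) = (\<Sum>u\<in>V. h u) + (\<Sum>c\<in>C j. \<Sum>u\<in>V. \<Sum>w\<in>V. K c u w * Hf h c w)"
    by (simp add: Hf.simps[of h j] sum.distrib sum.swap[of _ V "C j"])
  also have "(\<Sum>c\<in>C j. \<Sum>u\<in>V. \<Sum>w\<in>V. K c u w * Hf h c w) = (\<Sum>c\<in>C j. \<Sum>w\<in>V. Hf h c w)"
  proof (rule sum.cong)
    fix c assume c: "c \<in> C j"
    have "(\<Sum>u\<in>V. \<Sum>w\<in>V. K c u w * Hf h c w) = (\<Sum>w\<in>V. (\<Sum>u\<in>V. K c u w) * Hf h c w)"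
      by (subst sum.swap) (simp add: sum_distrib_right)
    also have "\<dots> = (\<Sum>w\<in>V. Hf h c w)" using K_col C_D[OF c] by simp
    finally show "(\<Sum>u\<in>V. \<Sum>w\<in>V. K c u w * Hf h c w) = (\<Sum>w\<in>V. Hf h c w)" .
  qed simp
  also have "\<dots> = 0" using 1 by simp
  finally show ?case using h0 by simp
qed

lemma Hf_root:
  assumes hs: "\<And>u u'. u \<in> V \<Longrightarrow> u' \<in> V \<Longrightarrow> h u - h u' \<le> 1" and h0: "(\<Sum>u\<in>V. h u) = 0"
  shows "Hf h 0 v0 \<le> oc 0"
proof -
  have "\<exists>u\<in>V. Hf h 0 u \<le> 0"
  proof (rule ccontr)
    assume "\<not> ?thesis"
    then have "\<forall>u\<in>V. 0 < Hf h 0 u" by auto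
    then have "0 < (\<Sum>u\<in>V. Hf h 0 u)" using v0V finV by (intro sum_pos) auto
    then show False using Hf_mean[OF h0] by simp
  qed
  then obtain u where u: "u \<in> V" "Hf h 0 u \<le> 0" by auto
  have "Hf h 0 v0 - Hf h 0 u \<le> oc 0" using Hf_spread[where h=h, OF hs] v0V u(1) by blast
  then show ?thesis using u by simp
qed

lemma oc_sum: "(\<Sum>c\<in>{1..m}. oc c) \<le> (real m + 1) / \<theta>"
proof -
  have "(\<Sum>j\<in>{0..m}. oc j) = (\<Sum>j\<in>{0..m}. 1 + (1 - \<theta>) * (\<Sum>c\<in>C j. oc c))"
    by (intro sum.cong refl) (subst oc.simps, simp)
  also have "\<dots> = (real m + 1) + (1 - \<theta>) * (\<Sum>c\<in>{1..m}. oc c)"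
    by (simp add: sum.distrib sum_distrib_left[symmetric] sum_C)
  finally have e: "(\<Sum>j\<in>{0..m}. oc j) = (real m + 1) + (1 - \<theta>) * (\<Sum>c\<in>{1..m}. oc c)" .
  have "(\<Sum>j\<in>{0..m}. oc j) = oc 0 + (\<Sum>c\<in>{1..m}. oc c)"
    by (simp add: sum.atLeast_Suc_atMost)
  then have "\<theta> * (\<Sum>c\<in>{1..m}. oc c) = real m + 1 - oc 0" using e by (simp add: algebra_simps)
  then have "\<theta> * (\<Sum>c\<in>{1..m}. oc c) \<le> real m + 1" using oc_ge1[of 0] by simp
  then show ?thesis using th0 by (simp add: field_simps)
qed

lemma powr_concave: "0 \<le> a \<Longrightarrow> a \<le> 1 \<Longrightarrow> concave_on {0<..} (\<lambda>x::real. x powr a)"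
  by (intro f''_le0_imp_concave derivative_eq_intros | simp add: mult_nonpos_nonneg)+

lemma powmean:
  fixes y :: "nat \<Rightarrow> real"
  assumes I: "finite I" and y: "\<And>i. i \<in> I \<Longrightarrow> 0 < y i" and a: "0 < a" "a \<le> 1"
  shows "(\<Sum>i\<in>I. y i powr a) \<le> real (card I) powr (1 - a) * (\<Sum>i\<in>I. y i) powr a"
proof (cases "I = {}")
  case True then show ?thesis by simp
next
  case False
  define k where "k = real (card I)"
  have k: "0 < k" unfolding k_def using I False by (simp add: card_gt_0_iff)
  have "(\<Sum>i\<in>I. (1/k) * y i powr a) \<le> (\<Sum>i\<in>I. (1/k) *\<^sub>R y i) powr a"
    using concave_on_sum[OF I False powr_concave[of a], of "\<lambda>_. 1/k" y] a y k
    by (auto simp: k_def)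
  also have "(\<Sum>i\<in>I. (1/k) *\<^sub>R y i) = (\<Sum>i\<in>I. y i) / k"
    by (simp add: sum_divide_distrib)
  also have "((\<Sum>i\<in>I. y i) / k) powr a = (\<Sum>i\<in>I. y i) powr a / k powr a"
  proof -
    have "0 \<le> sum y I" using y by (auto intro: sum_nonneg less_imp_le)
    then show ?thesis using k by (simp add: powr_divide)
  qed
  finally have "(\<Sum>i\<in>I. y i powr a) / k \<le> (\<Sum>i\<in>I. y i) powr a / k powr a"
    by (simp add: sum_divide_distrib)
  then have "(\<Sum>i\<in>I. y i powr a) \<le> k * ((\<Sum>i\<in>I. y i) powr a / k powr a)"
    using k by (simp add: field_simps)
  also have "k * ((\<Sum>i\<in>I. y i) powr a / k powr a) = k powr (1 - a) * (\<Sum>i\<in>I. y i) powr a"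
    using k by (simp add: powr_diff field_simps)
  finally show ?thesis unfolding k_def .
qed

lemma oc_max:
  fixes \<Delta> \<alpha> :: real
  assumes deg: "\<And>j. j \<le> m \<Longrightarrow> real (card (C j)) \<le> \<Delta>"
    and al: "0 < \<alpha>" "\<alpha> \<le> 1" and D1: "1 \<le> \<Delta>"
    and Dal: "\<Delta> powr (1 - \<alpha>) * (1 - \<theta>) \<le> 1 - \<theta> / 2"
    and j: "j \<le> m"
  shows "oc j \<le> (2 / \<theta>) * (real m + 1) powr \<alpha>"
proof -
  define q where "q j = ((\<theta> / 2) * oc j) powr (1 / \<alpha>)" for j
  have qpos: "0 < q j" for j unfolding q_def using oc_ge1[of j] th0 by simp
  have qa: "q j powr \<alpha> = (\<theta> / 2) * oc j" for j
    unfolding q_def using oc_ge1[of j] th0 al by (simp add: powr_powr)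
  have qrec: "q j \<le> 1 + (\<Sum>c\<in>C j. q c)" if "j \<le> m" for j
  proof -
    define Q where "Q = (\<Sum>c\<in>C j. q c)"
    have Q0: "0 \<le> Q" unfolding Q_def using qpos by (intro sum_nonneg) (auto intro: less_imp_le)
    have sq: "(\<Sum>c\<in>C j. q c powr \<alpha>) = (\<theta> / 2) * (\<Sum>c\<in>C j. oc c)"
      unfolding qa by (simp add: sum_distrib_left)
    have A: "(\<theta> / 2) * oc j = \<theta> / 2 + (1 - \<theta>) * (\<Sum>c\<in>C j. q c powr \<alpha>)"
      unfolding sq by (subst oc.simps[of j]) (simp add: field_simps)
    have B: "(\<Sum>c\<in>C j. q c powr \<alpha>) \<le> real (card (C j)) powr (1 - \<alpha>) * Q powr \<alpha>"
      unfolding Q_def using finite_C qpos al by (intro powmean) auto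
    have Cc: "real (card (C j)) powr (1 - \<alpha>) \<le> \<Delta> powr (1 - \<alpha>)"
      using deg[OF that] al by (intro powr_mono2) auto
    have BC: "(\<Sum>c\<in>C j. q c powr \<alpha>) \<le> \<Delta> powr (1 - \<alpha>) * Q powr \<alpha>"
      using B Cc by (meson order_trans mult_right_mono powr_ge_zero)
    have "(\<theta> / 2) * oc j \<le> \<theta> / 2 + (1 - \<theta>) * (\<Delta> powr (1 - \<alpha>) * Q powr \<alpha>)"
      unfolding A using BC th1 by (simp add: mult_left_mono)
    also have "\<dots> = \<theta> / 2 + (\<Delta> powr (1 - \<alpha>) * (1 - \<theta>)) * Q powr \<alpha>" by simp
    also have "\<dots> \<le> \<theta> / 2 + (1 - \<theta> / 2) * Q powr \<alpha>"
      using Dal by (intro add_left_mono mult_right_mono) auto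
    also have "\<dots> \<le> (1 + Q) powr \<alpha>"
    proof -
      have "1 \<le> (1 + Q) powr \<alpha>" using Q0 al by (intro ge_one_powr_ge_zero) auto
      moreover have "Q powr \<alpha> \<le> (1 + Q) powr \<alpha>" using Q0 al by (intro powr_mono2) auto
      ultimately have "\<theta> / 2 * 1 + (1 - \<theta> / 2) * Q powr \<alpha> \<le> \<theta> / 2 * (1 + Q) powr \<alpha> + (1 - \<theta> / 2) * (1 + Q) powr \<alpha>"
        using th0 th1 by (intro add_mono mult_left_mono) auto
      also have "\<theta> / 2 * (1 + Q) powr \<alpha> + (1 - \<theta> / 2) * (1 + Q) powr \<alpha> = (1 + Q) powr \<alpha>"
        by (simp add: ring_distribs)
      finally show ?thesis by simp
    qed
    finally have "(\<theta> / 2) * oc j \<le> (1 + Q) powr \<alpha>" .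
    then have "q j \<le> ((1 + Q) powr \<alpha>) powr (1 / \<alpha>)"
      unfolding q_def using oc_ge1[of j] th0 al by (intro powr_mono2) auto
    also have "\<dots> = 1 + Q" using Q0 al by (simp add: powr_powr)
    finally show ?thesis unfolding Q_def .
  qed
  define Fr where "Fr k = {c \<in> {k..m}. 1 \<le> c \<and> p c < k}" for k
  have frs: "(\<Sum>c\<in>Fr (m + 1 - d). q c) \<le> real d" if "d \<le> m" for d
    using that
  proof (induction d)
    case 0
    have "Fr (m + 1) = {}" unfolding Fr_def by auto
    then show ?case by simp
  next
    case (Suc d)
    define k where "k = m - d"
    have k: "1 \<le> k" "k \<le> m" "m + 1 - Suc d = k" "m + 1 - d = Suc k" using Suc.prems by (auto simp: k_def)
    have Fe: "Fr k = insert k (Fr (Suc k) - C k)"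
      unfolding Fr_def C_def using p_lt k by (auto simp: le_Suc_eq)
    have sub: "C k \<subseteq> Fr (Suc k)" unfolding Fr_def C_def by auto
    have fin: "finite (Fr j)" for j unfolding Fr_def by auto
    have nk: "k \<notin> Fr (Suc k) - C k" unfolding Fr_def by auto
    have "(\<Sum>c\<in>Fr k. q c) = q k + ((\<Sum>c\<in>Fr (Suc k). q c) - (\<Sum>c\<in>C k. q c))"
      unfolding Fe using fin nk sub by (simp add: sum_diff)
    also have "\<dots> \<le> 1 + (\<Sum>c\<in>Fr (Suc k). q c)" using qrec[of k] k by simp
    also have "\<dots> \<le> 1 + real d" using Suc k by simp
    finally show ?case using k by simp
  qed
  have "q j \<le> real m + 1"
  proof (cases "j = 0")
    case True
    have "q 0 \<le> 1 + (\<Sum>c\<in>C 0. q c)" using qrec by simp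
    also have "(\<Sum>c\<in>C 0. q c) \<le> (\<Sum>c\<in>Fr 1. q c)"
      using qpos by (intro sum_mono2) (auto simp: Fr_def C_def intro: less_imp_le)
    also have "\<dots> \<le> real m" using frs[of m] by simp
    finally show ?thesis using True by simp
  next
    case False
    have "q j \<le> (\<Sum>c\<in>Fr j. q c)"
      using False j p_lt[of j] qpos by (intro member_le_sum) (auto simp: Fr_def intro: less_imp_le)
    also have "\<dots> \<le> real (m + 1 - j)" using frs[of "m + 1 - j"] False j by simp
    finally show ?thesis using j by simp
  qed
  then have "q j powr \<alpha> \<le> (real m + 1) powr \<alpha>" using qpos al by (intro powr_mono2) (auto intro: less_imp_le)
  then have "(\<theta> / 2) * oc j \<le> (real m + 1) powr \<alpha>" unfolding qa .
  then show ?thesis using th0 by (simp add: field_simps)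
qed

definition Gf :: "(nat \<Rightarrow> real) \<Rightarrow> nat \<Rightarrow> nat \<Rightarrow> nat \<Rightarrow> real" where
  "Gf h k j u = h u + (\<Sum>c\<in>{c \<in> C j. k < c}. KK c (Hf h c) u)"

lemma mgf_inv:
  assumes hs: "\<And>u u'. u \<in> V \<Longrightarrow> u' \<in> V \<Longrightarrow> h u - h u' \<le> 1"
    and lo: "\<And>c. 1 \<le> c \<Longrightarrow> c \<le> m \<Longrightarrow> \<bar>l\<bar> * oc c \<le> 1"
    and k: "k \<le> m"
  shows "T m (\<lambda>j w. exp (l * h w)) \<le> exp (l^2 * (\<Sum>c\<in>{k<..m}. (oc c)^2)) * T k (\<lambda>j w. exp (l * Gf h k j w))"
  using k
proof (induction rule: inc_induct)
  case base
  have "T m (\<lambda>j w. exp (l * h w)) = T m (\<lambda>j w. exp (l * Gf h m j w))"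
  proof -
    have e: "{c \<in> C j. m < c} = {}" for j by (auto dest: C_D)
    show ?thesis unfolding Gf_def e by simp
  qed
  then show ?case by simp
next
  case (step n)
  let ?k = "Suc n"
  let ?i = "p ?k"
  define \<psi> where "\<psi> k = (\<lambda>j w. exp (l * Gf h k j w))" for k
  have sk: "1 \<le> ?k" "?k \<le> m" using step by auto
  have ik: "?i < ?k" using p_lt sk by auto
  have kC: "?k \<in> C ?i" unfolding C_def using sk ik by auto
  have psk: "\<psi> ?k ?k w = exp (l * Hf h ?k w)" for w
  proof -
    have "{c \<in> C ?k. ?k < c} = C ?k" by (auto dest: C_D)
    then show ?thesis unfolding \<psi>_def Gf_def by (simp add: Hf_eq[of h ?k w])
  qed
  have sp: "\<And>w w'. w \<in> V \<Longrightarrow> w' \<in> V \<Longrightarrow> Hf h ?k w - Hf h ?k w' \<le> oc ?k"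
    using Hf_spread[where h=h, OF hs] by blast
  have "T ?k (\<psi> ?k) = T n ((\<psi> ?k)(?i := (\<lambda>u. \<psi> ?k ?i u * KK ?k (\<psi> ?k ?k) u)))"
    using sk by (intro T_Suc) auto
  also have "\<dots> \<le> T n ((\<psi> n)(?i := (\<lambda>u. exp (l^2 * (oc ?k)^2) * \<psi> n ?i u)))"
  proof (rule T_mono)
    show "n \<le> m" using step by simp
    fix j w assume j: "j \<le> n" and w: "w \<in> V"
    show "0 \<le> ((\<psi> ?k)(?i := (\<lambda>u. \<psi> ?k ?i u * KK ?k (\<psi> ?k ?k) u))) j w \<and>
      ((\<psi> ?k)(?i := (\<lambda>u. \<psi> ?k ?i u * KK ?k (\<psi> ?k ?k) u))) j w \<le> ((\<psi> n)(?i := (\<lambda>u. exp (l^2 * (oc ?k)^2) * \<psi> n ?i u))) j w"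
    proof (cases "j = ?i")
      case True
      have KKe: "KK ?k (\<psi> ?k ?k) w = KK ?k (\<lambda>w. exp (l * Hf h ?k w)) w"
        unfolding KK_def psk ..
      have KKn: "0 \<le> KK ?k (\<psi> ?k ?k) w"
        unfolding KK_def using K_nonneg sk w by (intro sum_nonneg mult_nonneg_nonneg) (auto simp: \<psi>_def)
      have m1: "KK ?k (\<psi> ?k ?k) w \<le> exp (l * KK ?k (Hf h ?k) w + l^2 * (oc ?k)^2)"
        unfolding KKe using sk w sp lo[of ?k] by (intro mgf1) auto
      have setq: "{c \<in> C ?i. n < c} = insert ?k {c \<in> C ?i. ?k < c}" using kC by auto
      have Gn: "Gf h n ?i w = Gf h ?k ?i w + KK ?k (Hf h ?k) w"
        unfolding Gf_def setq using finite_C by (subst sum.insert) auto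
      have "\<psi> ?k ?i w * KK ?k (\<psi> ?k ?k) w \<le> \<psi> ?k ?i w * exp (l * KK ?k (Hf h ?k) w + l^2 * (oc ?k)^2)"
        using m1 by (intro mult_left_mono) (auto simp: \<psi>_def)
      also have "\<dots> = exp (l^2 * (oc ?k)^2) * \<psi> n ?i w"
        unfolding \<psi>_def Gn by (simp add: algebra_simps exp_add[symmetric])
      finally show ?thesis using True KKn by (auto simp: \<psi>_def)
    next
      case False
      have "{c \<in> C j. n < c} = {c \<in> C j. ?k < c}"
        using False by (auto simp: C_def) (metis Suc_lessI)
      then have G: "Gf h ?k j w = Gf h n j w" unfolding Gf_def by simp
      then show ?thesis using False by (simp add: \<psi>_def G)
    qed
  qed
  also have "\<dots> = exp (l^2 * (oc ?k)^2) * T n (\<psi> n)"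
    using ik by (intro T_scale) auto
  finally have st: "T ?k (\<psi> ?k) \<le> exp (l^2 * (oc ?k)^2) * T n (\<psi> n)" .
  have se: "{n<..m} = insert ?k {?k<..m}" using step by auto
  have "T m (\<lambda>j w. exp (l * h w)) \<le> exp (l^2 * (\<Sum>c\<in>{?k<..m}. (oc c)^2)) * T ?k (\<psi> ?k)"
    using step.IH unfolding \<psi>_def .
  also have "\<dots> \<le> exp (l^2 * (\<Sum>c\<in>{?k<..m}. (oc c)^2)) * (exp (l^2 * (oc ?k)^2) * T n (\<psi> n))"
    using st by (intro mult_left_mono) auto
  also have "\<dots> = exp (l^2 * (\<Sum>c\<in>{n<..m}. (oc c)^2)) * T n (\<psi> n)"
    unfolding se by (simp add: algebra_simps exp_add[symmetric])
  finally show ?case unfolding \<psi>_def .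
qed

lemma mgf:
  assumes hs: "\<And>u u'. u \<in> V \<Longrightarrow> u' \<in> V \<Longrightarrow> h u - h u' \<le> 1"
    and lo: "\<And>c. 1 \<le> c \<Longrightarrow> c \<le> m \<Longrightarrow> \<bar>l\<bar> * oc c \<le> 1"
  shows "T m (\<lambda>j w. exp (l * h w)) \<le> exp (l^2 * (\<Sum>c\<in>{1..m}. (oc c)^2) + l * Hf h 0 v0)"
proof -
  have "T m (\<lambda>j w. exp (l * h w)) \<le> exp (l^2 * (\<Sum>c\<in>{0<..m}. (oc c)^2)) * T 0 (\<lambda>j w. exp (l * Gf h 0 j w))"
    using mgf_inv[OF hs lo] by simp
  also have "T 0 (\<lambda>j w. exp (l * Gf h 0 j w)) = exp (l * Hf h 0 v0)"
  proof -
    have "{c \<in> C 0. 0 < c} = C 0" by (auto dest: C_D)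
    then show ?thesis unfolding T_0 Gf_def by (simp add: Hf_eq[of h 0 v0])
  qed
  also have "{0<..m} = {1..m}" by auto
  finally show ?thesis by (simp add: exp_add)
qed

lemma tail:
  assumes hs: "\<And>u u'. u \<in> V \<Longrightarrow> u' \<in> V \<Longrightarrow> h u - h u' \<le> 1"
    and h0: "(\<Sum>u\<in>V. h u) = 0"
    and L: "\<And>c. c \<le> m \<Longrightarrow> oc c \<le> L"
    and aL: "2 * L \<le> a" and am: "a \<le> real m + 1"
  shows "Pr (\<lambda>f. a \<le> (\<Sum>j\<in>{0..m}. h (f j))) \<le> exp (- (a^2 * \<theta> / (16 * L * (real m + 1))))"
proof -
  have L1: "1 \<le> L" using L[of 0] oc_ge1[of 0] by simp
  have a0: "0 < a" using aL L1 by simp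
  define M1 where "M1 = real m + 1"
  have M1: "1 \<le> M1" unfolding M1_def by simp
  define l where "l = a * \<theta> / (4 * L * M1)"
  have l0: "0 \<le> l" unfolding l_def using a0 th0 L1 M1 by simp
  have lL: "l * L \<le> 1"
  proof -
    have "l * L = a * \<theta> / (4 * M1)" unfolding l_def using L1 by (simp add: field_simps)
    also have "\<dots> \<le> 1"
    proof -
      have "a * \<theta> \<le> M1 * 1" using mult_mono[of a M1 \<theta> 1] am th1 th0 a0 by (simp add: M1_def)
      then show ?thesis using M1 by (simp add: field_simps)
    qed
    finally show ?thesis .
  qed
  have lo: "\<bar>l\<bar> * oc c \<le> 1" if "1 \<le> c" "c \<le> m" for c
    using mult_left_mono[OF L[of c] l0] lL l0 that by simp
  have Q: "(\<Sum>c\<in>{1..m}. (oc c)^2) \<le> L * (M1 / \<theta>)"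
  proof -
    have "(\<Sum>c\<in>{1..m}. (oc c)^2) \<le> (\<Sum>c\<in>{1..m}. L * oc c)"
    proof (rule sum_mono)
      fix c assume "c \<in> {1..m}"
      then have "oc c \<le> L" "0 \<le> oc c" using L oc_ge1[of c] by auto
      then show "(oc c)^2 \<le> L * oc c" by (simp add: power2_eq_square mult_right_mono)
    qed
    also have "\<dots> = L * (\<Sum>c\<in>{1..m}. oc c)" by (simp add: sum_distrib_left)
    also have "\<dots> \<le> L * (M1 / \<theta>)" using oc_sum L1 unfolding M1_def by (intro mult_left_mono) auto
    finally show ?thesis .
  qed
  have H0: "Hf h 0 v0 \<le> L" using Hf_root[OF hs h0] L[of 0] by simp
  have "Pr (\<lambda>f. a \<le> (\<Sum>j\<in>{0..m}. h (f j))) \<le> (\<Sum>f\<in>Om m. W m f * exp (l * ((\<Sum>j\<in>{0..m}. h (f j)) - a)))"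
    unfolding Pr_def
  proof (rule sum_mono)
    fix f assume f: "f \<in> Om m"
    have "(if a \<le> (\<Sum>j\<in>{0..m}. h (f j)) then 1 else 0) \<le> exp (l * ((\<Sum>j\<in>{0..m}. h (f j)) - a))"
    proof (cases "a \<le> (\<Sum>j\<in>{0..m}. h (f j))")
      case True
      then have "0 \<le> l * ((\<Sum>j\<in>{0..m}. h (f j)) - a)" using l0 by simp
      then show ?thesis using True by simp
    qed simp
    then show "W m f * (if a \<le> (\<Sum>j\<in>{0..m}. h (f j)) then 1 else 0) \<le> W m f * exp (l * ((\<Sum>j\<in>{0..m}. h (f j)) - a))"
      using W_nonneg[OF _ f] by (intro mult_left_mono) auto
  qed
  also have "\<dots> = exp (- l * a) * T m (\<lambda>j w. exp (l * h w))"
    unfolding T_def sum_distrib_left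
  proof (rule sum.cong)
    fix f assume "f \<in> Om m"
    have "l * ((\<Sum>j\<in>{0..m}. h (f j)) - a) = - l * a + (\<Sum>j\<in>{0..m}. l * h (f j))"
      by (simp add: sum_distrib_left algebra_simps)
    then have "exp (l * ((\<Sum>j\<in>{0..m}. h (f j)) - a)) = exp (- l * a) * exp (\<Sum>j\<in>{0..m}. l * h (f j))"
      by (simp only: exp_add)
    then show "W m f * exp (l * ((\<Sum>j\<in>{0..m}. h (f j)) - a)) = exp (- l * a) * (W m f * (\<Prod>j\<in>{0..m}. exp (l * h (f j))))"
      by (simp add: exp_sum)
  qed simp
  also have "\<dots> \<le> exp (- l * a) * exp (l^2 * (\<Sum>c\<in>{1..m}. (oc c)^2) + l * Hf h 0 v0)"
    using mgf[OF hs lo] by (intro mult_left_mono) auto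
  also have "\<dots> = exp (- l * a + (l^2 * (\<Sum>c\<in>{1..m}. (oc c)^2) + l * Hf h 0 v0))"
    by (simp only: exp_add)
  also have "\<dots> = exp (- l * a + l^2 * (\<Sum>c\<in>{1..m}. (oc c)^2) + l * Hf h 0 v0)"
    by (simp only: add.assoc)
  also have "\<dots> \<le> exp (- l * a + l^2 * (L * (M1 / \<theta>)) + l * (a / 2))"
  proof -
    have "l^2 * (\<Sum>c\<in>{1..m}. (oc c)^2) \<le> l^2 * (L * (M1 / \<theta>))" using Q by (intro mult_left_mono) auto
    moreover have "l * Hf h 0 v0 \<le> l * (a / 2)" using H0 aL l0 by (intro mult_left_mono) auto
    ultimately have "- l * a + l^2 * (\<Sum>c\<in>{1..m}. (oc c)^2) + l * Hf h 0 v0 \<le> - l * a + l^2 * (L * (M1 / \<theta>)) + l * (a / 2)"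
      by linarith
    then show ?thesis by (simp only: exp_le_cancel_iff)
  qed
  also have "- l * a + l^2 * (L * (M1 / \<theta>)) + l * (a / 2) = - (a^2 * \<theta> / (16 * L * M1))"
    unfolding l_def using th0 L1 M1 by (simp add: field_simps power2_eq_square)
  finally show ?thesis unfolding M1_def .
qed

lemma tail2:
  assumes hs: "\<And>u u'. u \<in> V \<Longrightarrow> u' \<in> V \<Longrightarrow> h u - h u' \<le> 1"
    and h0: "(\<Sum>u\<in>V. h u) = 0"
    and L: "\<And>c. c \<le> m \<Longrightarrow> oc c \<le> L"
    and aL: "2 * L \<le> a" and am: "a \<le> real m + 1"
  shows "Pr (\<lambda>f. a \<le> \<bar>\<Sum>j\<in>{0..m}. h (f j)\<bar>) \<le> 2 * exp (- (a^2 * \<theta> / (16 * L * (real m + 1))))"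
proof -
  have hs': "\<And>u u'. u \<in> V \<Longrightarrow> u' \<in> V \<Longrightarrow> (- h u) - (- h u') \<le> 1" using hs by force
  have h0': "(\<Sum>u\<in>V. - h u) = 0" using h0 by (simp add: sum_negf)
  have "Pr (\<lambda>f. a \<le> \<bar>\<Sum>j\<in>{0..m}. h (f j)\<bar>) \<le> Pr (\<lambda>f. a \<le> (\<Sum>j\<in>{0..m}. h (f j)) \<or> a \<le> (\<Sum>j\<in>{0..m}. - h (f j)))"
  proof (rule Pr_mono)
    fix f assume a: "a \<le> \<bar>\<Sum>j\<in>{0..m}. h (f j)\<bar>"
    have n: "(\<Sum>j\<in>{0..m}. - h (f j)) = - (\<Sum>j\<in>{0..m}. h (f j))" by (rule sum_negf)
    show "a \<le> (\<Sum>j\<in>{0..m}. h (f j)) \<or> a \<le> (\<Sum>j\<in>{0..m}. - h (f j))"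
      unfolding n using a by (cases "0 \<le> (\<Sum>j\<in>{0..m}. h (f j))") (simp_all add: abs_if)
  qed
  also have "\<dots> \<le> Pr (\<lambda>f. a \<le> (\<Sum>j\<in>{0..m}. h (f j))) + Pr (\<lambda>f. a \<le> (\<Sum>j\<in>{0..m}. - h (f j)))"
    by (rule Pr_disj)
  also have "\<dots> \<le> exp (- (a^2 * \<theta> / (16 * L * (real m + 1)))) + exp (- (a^2 * \<theta> / (16 * L * (real m + 1))))"
    using tail[OF hs h0 L aL am] tail[where h="\<lambda>u. - h u", OF hs' h0' L aL am] by (intro add_mono)
  finally show ?thesis by simp
qed

end




lemma asym:
  fixes \<theta> \<gamma> b :: real
  assumes as: "0 < \<theta>" "\<theta> \<le> 1" "0 < \<gamma>" "\<gamma> \<le> 1/4" "2 \<le> b"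
  shows "\<exists>R\<ge>1. \<forall>r\<ge>R. 2 \<le> exp (r^2) \<and> b \<le> exp (r^2) \<and> \<theta> / (4 * \<gamma> * r) < 1 \<and>
     (12 / \<theta>) * exp (-3*r) * (b * ((ln b + r^2) / ln 2)) \<le> exp (- r / 17) \<and>
     3 * r^2 + 1 \<le> \<theta>^2 * exp (2*r) * exp (- r / 17)^2 / (288 * (b * ((ln b + r^2) / ln 2))^2) \<and>
     9 * b * exp (2*\<gamma>*r) * exp (- (r^2/2)) + exp (- (r^2)) + 4 * exp (- (2 * r^2)) \<le> exp (- (r^2/3))"
proof -
  have ev1: "eventually (\<lambda>r::real. 2 \<le> exp (r^2)) at_top" by real_asymp
  have ev2: "eventually (\<lambda>r::real. b \<le> exp (r^2)) at_top" by real_asymp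
  have ev3: "eventually (\<lambda>r. \<theta> / (4 * \<gamma> * r) < 1) at_top" using as by real_asymp
  have ev4: "eventually (\<lambda>r. (12 / \<theta>) * exp (-3*r) * (b * ((ln b + r^2) / ln 2)) \<le> exp (- r / 17)) at_top"
    using as by real_asymp
  have ev5: "eventually (\<lambda>r. 3 * r^2 + 1 \<le> \<theta>^2 * exp (2*r) * exp (- r / 17)^2 / (288 * (b * ((ln b + r^2) / ln 2))^2)) at_top"
    using as by real_asymp
  have ev6: "eventually (\<lambda>r. 9 * b * exp (2*\<gamma>*r) * exp (- (r^2/2)) + exp (- (r^2)) + 4 * exp (- (2 * r^2)) \<le> exp (- (r^2/3))) at_top"
    using as by real_asymp
  have ev7: "eventually (\<lambda>r::real. 1 \<le> r) at_top" by real_asymp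
  have "eventually (\<lambda>r. 1 \<le> r \<and> 2 \<le> exp (r^2) \<and> b \<le> exp (r^2) \<and> \<theta> / (4 * \<gamma> * r) < 1 \<and>
     (12 / \<theta>) * exp (-3*r) * (b * ((ln b + r^2) / ln 2)) \<le> exp (- r / 17) \<and>
     3 * r^2 + 1 \<le> \<theta>^2 * exp (2*r) * exp (- r / 17)^2 / (288 * (b * ((ln b + r^2) / ln 2))^2) \<and>
     9 * b * exp (2*\<gamma>*r) * exp (- (r^2/2)) + exp (- (r^2)) + 4 * exp (- (2 * r^2)) \<le> exp (- (r^2/3))) at_top"
    using ev1 ev2 ev3 ev4 ev5 ev6 ev7 by eventually_elim auto
  then obtain R where R: "\<forall>r\<ge>R. 1 \<le> r \<and> 2 \<le> exp (r^2) \<and> b \<le> exp (r^2) \<and> \<theta> / (4 * \<gamma> * r) < 1 \<and>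
     (12 / \<theta>) * exp (-3*r) * (b * ((ln b + r^2) / ln 2)) \<le> exp (- r / 17) \<and>
     3 * r^2 + 1 \<le> \<theta>^2 * exp (2*r) * exp (- r / 17)^2 / (288 * (b * ((ln b + r^2) / ln 2))^2) \<and>
     9 * b * exp (2*\<gamma>*r) * exp (- (r^2/2)) + exp (- (r^2)) + 4 * exp (- (2 * r^2)) \<le> exp (- (r^2/3))"
    unfolding eventually_at_top_linorder by blast
  show ?thesis
    using R by (intro exI[of _ "max R 1"]) auto
qed

lemma numeric:
  fixes \<theta> \<gamma> b N r M1 A :: real
  assumes as: "0 < \<theta>" "\<theta> \<le> 1" "0 < \<gamma>" "\<gamma> \<le> 1/4" "\<gamma> \<le> \<theta>/64" "2 \<le> b"
    and N: "2 \<le> N" and r: "r = sqrt (ln N)" "1 \<le> r"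
    and E3: "\<theta> / (4 * \<gamma> * r) < 1"
    and E4: "(12 / \<theta>) * exp (-3*r) * (b * ((ln b + r^2) / ln 2)) \<le> exp (- r / 17)"
    and E5: "3 * r^2 + 1 \<le> \<theta>^2 * exp (2*r) * exp (- r / 17)^2 / (288 * (b * ((ln b + r^2) / ln 2))^2)"
    and M1: "N powr (1/4) + 1 \<le> M1" "M1 \<le> 3 * exp (\<gamma> * r) * N powr (1/4)"
    and A: "N powr (1/4) * exp (- r / 17) / (b * log 2 (b * N)) \<le> A" "A \<le> N powr (1/4)"
  shows "2 * ((2 / \<theta>) * M1 powr (1 - \<theta> / (4 * \<gamma> * r))) \<le> A"
    "A \<le> M1"
    "2 * exp (- (A^2 * \<theta> / (16 * ((2 / \<theta>) * M1 powr (1 - \<theta> / (4 * \<gamma> * r))) * M1))) \<le> 1 / N^3"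
proof -
  define q where "q = N powr (1/4)"
  define \<beta> where "\<beta> = \<theta> / (4 * \<gamma> * r)"
  define lg where "lg = (ln b + r^2) / ln 2"
  have q0: "0 < q" unfolding q_def using N by simp
  have lnN: "ln N = r^2" using r N by simp
  have lgeq: "log 2 (b * N) = lg" unfolding lg_def log_def using as N by (simp add: ln_mult lnN)
  have lg1: "1 \<le> lg"
  proof -
    have "ln 2 \<le> ln b" using as by simp
    moreover have "0 \<le> ln b" using as by simp
    moreover have "0 < ln (2::real)" by simp
    ultimately have "ln 2 \<le> ln b + r^2" using r by simp
    then show ?thesis unfolding lg_def by simp
  qed
  have b0: "0 < b" using as by simp
  have M1q: "q \<le> M1" using M1 unfolding q_def by simp
  have M10: "0 < M1" using M1q q0 by simp
  have \<beta>: "0 < \<beta>" "\<beta> < 1" using E3 as r unfolding \<beta>_def by auto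
  have "M1 powr (1 - \<beta>) = M1 * M1 powr (- \<beta>)"
    using M10 by (simp add: powr_diff powr_minus divide_inverse)
  also have "M1 powr (- \<beta>) \<le> q powr (- \<beta>)"
    using M1q q0 \<beta> by (intro powr_mono2') auto
  also have "q powr (- \<beta>) = exp (- (\<theta> * r / (16 * \<gamma>)))"
  proof -
    have "q powr (- \<beta>) = N powr (- \<beta> / 4)" unfolding q_def using N by (simp add: powr_powr)
    also have "\<dots> = exp (- \<beta> / 4 * r^2)" using N by (simp add: powr_def lnN)
    also have "- \<beta> / 4 * r^2 = - (\<theta> * r / (16 * \<gamma>))" unfolding \<beta>_def using r as by (simp add: field_simps power2_eq_square)
    finally show ?thesis .
  qed
  finally have Mp1: "M1 powr (1 - \<beta>) \<le> M1 * exp (- (\<theta> * r / (16 * \<gamma>)))"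
    using M10 by (simp add: mult_left_mono)
  have g4: "4 \<le> \<theta> / (16 * \<gamma>)" using as by (simp add: field_simps)
  have "M1 * exp (- (\<theta> * r / (16 * \<gamma>))) \<le> 3 * exp (\<gamma> * r) * q * exp (- (\<theta> * r / (16 * \<gamma>)))"
    using M1 unfolding q_def by (intro mult_right_mono) auto
  also have "\<dots> = 3 * q * exp ((\<gamma> - \<theta> / (16 * \<gamma>)) * r)"
    by (simp add: exp_add[symmetric] algebra_simps)
  also have "\<dots> \<le> 3 * q * exp (-3 * r)"
  proof -
    have "(\<gamma> - \<theta> / (16 * \<gamma>)) * r \<le> -3 * r" using g4 as r by (intro mult_right_mono) auto
    then show ?thesis using q0 by simp
  qed
  finally have Mp: "M1 powr (1 - \<beta>) \<le> 3 * q * exp (-3 * r)" using Mp1 by simp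
  have Mp0: "0 < M1 powr (1 - \<beta>)" using M10 by simp
  define L where "L = (2 / \<theta>) * M1 powr (1 - \<beta>)"
  have L0: "0 < L" unfolding L_def using Mp0 as by simp
  have "2 * L \<le> (12 / \<theta>) * exp (-3 * r) * q"
    unfolding L_def using Mp as by (simp add: field_simps)
  also have "\<dots> \<le> q * exp (- r / 17) / (b * lg)"
  proof -
    have "(12 / \<theta>) * exp (-3 * r) * (b * lg) \<le> exp (- r / 17)" using E4 unfolding lg_def .
    then have "(12 / \<theta>) * exp (-3 * r) \<le> exp (- r / 17) / (b * lg)" using b0 lg1 by (simp add: field_simps)
    then have "q * ((12 / \<theta>) * exp (-3 * r)) \<le> q * (exp (- r / 17) / (b * lg))" using q0 by (intro mult_left_mono) auto
    then show ?thesis by (simp add: field_simps)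
  qed
  also have "\<dots> \<le> A" using A(1) unfolding q_def lgeq by simp
  finally show "2 * ((2 / \<theta>) * M1 powr (1 - \<theta> / (4 * \<gamma> * r))) \<le> A" unfolding L_def \<beta>_def .
  show "A \<le> M1" using A(2) M1q unfolding q_def by simp
  have A0: "0 < A" using A(1) q0 b0 lg1 lgeq unfolding q_def by (smt (verit) divide_pos_pos exp_gt_zero mult_pos_pos)
  define \<rho> where "\<rho> = exp (- r / 17) / (b * lg)"
  have \<rho>0: "0 \<le> \<rho>" unfolding \<rho>_def using b0 lg1 by simp
  have Aq: "q * \<rho> \<le> A" using A(1) unfolding \<rho>_def q_def lgeq by simp
  have "3 * r^2 + 1 \<le> \<rho>^2 * \<theta>^2 * exp (2 * r) / 288"
    using E5 unfolding \<rho>_def lg_def by (simp add: power_divide power_mult_distrib field_simps)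
  also have "\<dots> \<le> A^2 * \<theta>^2 / (32 * (3 * q * exp (-3 * r)) * (3 * exp (\<gamma> * r) * q))"
  proof -
    have "(q * \<rho>)^2 \<le> A^2" using Aq q0 \<rho>0 by (intro power_mono) auto
    then have h2: "(q * \<rho>)^2 * \<theta>^2 \<le> A^2 * \<theta>^2" by (rule mult_right_mono) simp
    have "\<rho>^2 * \<theta>^2 = ((q * \<rho>)^2 * \<theta>^2) / q^2" using q0 by (simp add: power_mult_distrib field_simps)
    also have "\<dots> \<le> A^2 * \<theta>^2 / q^2" using h2 by (simp add: divide_right_mono)
    finally have "\<rho>^2 * \<theta>^2 \<le> A^2 * \<theta>^2 / q^2" .
    moreover have "exp (2 * r) \<le> 1 / (exp (-3 * r) * exp (\<gamma> * r))"
    proof -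
      have "\<gamma> * r \<le> 1 * r" using as r by (intro mult_right_mono) auto
      then have "2 * r \<le> 3 * r - \<gamma> * r" by simp
      then have "exp (2 * r) \<le> exp (3 * r - \<gamma> * r)" by simp
      also have "\<dots> = 1 / (exp (-3 * r) * exp (\<gamma> * r))" by (simp add: exp_diff exp_minus field_simps)
      finally show ?thesis .
    qed
    ultimately have "\<rho>^2 * \<theta>^2 * exp (2 * r) \<le> A^2 * \<theta>^2 / q^2 * (1 / (exp (-3 * r) * exp (\<gamma> * r)))"
      by (intro mult_mono) auto
    then show ?thesis using q0 by (simp add: field_simps power2_eq_square)
  qed
  also have "\<dots> \<le> A^2 * \<theta>^2 / (32 * M1 powr (1 - \<beta>) * M1)"
  proof -
    have "M1 powr (1 - \<beta>) * M1 \<le> (3 * q * exp (-3 * r)) * (3 * exp (\<gamma> * r) * q)"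
      using Mp M1(2) Mp0 M10 unfolding q_def by (intro mult_mono) auto
    then have D: "32 * M1 powr (1 - \<beta>) * M1 \<le> 32 * (3 * q * exp (-3 * r)) * (3 * exp (\<gamma> * r) * q)"
      by (simp add: mult_ac)
    show ?thesis using D Mp0 M10 by (intro frac_le) auto
  qed
  also have "A^2 * \<theta>^2 / (32 * M1 powr (1 - \<beta>) * M1) = A^2 * \<theta> / (16 * L * M1)"
    unfolding L_def using as by (simp add: field_simps power2_eq_square)
  finally have X: "3 * r^2 + 1 \<le> A^2 * \<theta> / (16 * L * M1)" .
  have "2 * exp (- (A^2 * \<theta> / (16 * L * M1))) \<le> 2 * exp (- (3 * r^2 + 1))" using X by simp
  also have "\<dots> = (2 / exp 1) * exp (- (3 * r^2))" by (simp add: exp_add[symmetric] exp_minus field_simps)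
  also have "\<dots> \<le> exp (- (3 * r^2))"
  proof -
    have "2 \<le> exp (1::real)" using exp_ge_add_one_self[of 1] by simp
    then have "2 / exp 1 \<le> (1::real)" by simp
    then show ?thesis by (intro mult_left_le_one_le) auto
  qed
  also have "\<dots> = 1 / N^3"
  proof -
    have "exp (3 * ln N) = exp (ln N) ^ 3" using exp_of_nat_mult[of 3 "ln N"] by simp
    then have "N^3 = exp (3 * r^2)" using N by (simp add: lnN[symmetric])
    then show ?thesis by (simp add: exp_minus inverse_eq_divide)
  qed
  finally show "2 * exp (- (A^2 * \<theta> / (16 * ((2 / \<theta>) * M1 powr (1 - \<theta> / (4 * \<gamma> * r))) * M1))) \<le> 1 / N^3"
    unfolding L_def \<beta>_def .
qed


definition Kc :: "(nat \<times> nat) set \<Rightarrow> (nat \<Rightarrow> nat \<Rightarrow> real) \<Rightarrow> (nat \<times> nat) set \<Rightarrow> nat \<Rightarrow> nat \<Rightarrow> nat \<Rightarrow> real" where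
  "Kc E x A j u w = (if (tree_parent A j, j) \<in> A then (if (u, w) \<in> E then x u w else 0)
                     else (if (w, u) \<in> E then x w u else 0))"

lemma rt_weight_Kc: "rt_weight E x A f j = Kc E x A j (f (tree_parent A j)) (f j)"
  unfolding rt_weight_def Kc_def Let_def by simp

lemma tp:
  assumes "bfs_oriented_tree m A" "1 \<le> j" "j \<le> m"
  shows "tree_parent A j < j \<and> ((tree_parent A j, j) \<in> A \<or> (j, tree_parent A j) \<in> A)"
proof -
  have "\<exists>!i. i < j \<and> ((i, j) \<in> A \<or> (j, i) \<in> A)" using assms unfolding bfs_oriented_tree_def by auto
  then show ?thesis unfolding tree_parent_def by (rule theI')
qed

lemma out_sum:
  assumes "E \<subseteq> V \<times> V" "finite V"
  shows "(\<Sum>w\<in>V. if (u, w) \<in> E then F w else 0) = (\<Sum>w\<in>out_nbrs E u. F w)"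
proof -
  have "out_nbrs E u = {w \<in> V. (u, w) \<in> E}" unfolding out_nbrs_def using assms by auto
  then show ?thesis using assms by (simp add: sum.inter_filter)
qed

lemma in_sum:
  assumes "E \<subseteq> V \<times> V" "finite V"
  shows "(\<Sum>w\<in>V. if (w, u) \<in> E then F w else 0) = (\<Sum>w\<in>in_nbrs E u. F w)"
proof -
  have "in_nbrs E u = {w \<in> V. (w, u) \<in> E}" unfolding in_nbrs_def using assms by auto
  then show ?thesis using assms by (simp add: sum.inter_filter)
qed

lemma overlap_gen:
  fixes k1 k2 :: "nat \<Rightarrow> real" and \<epsilon> b :: real
  assumes V: "finite V" "card V = n" and XY: "X \<subseteq> V" "Y \<subseteq> V"
    and cX: "(1/2 + \<epsilon>) * real n \<le> real (card X)" and cY: "(1/2 + \<epsilon>) * real n \<le> real (card Y)"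
    and k1: "\<And>w. w \<in> V \<Longrightarrow> 0 \<le> k1 w" "\<And>w. w \<in> X \<Longrightarrow> 1 / (b * real n) \<le> k1 w"
    and k2: "\<And>w. w \<in> V \<Longrightarrow> 0 \<le> k2 w" "\<And>w. w \<in> Y \<Longrightarrow> 1 / (b * real n) \<le> k2 w"
    and bn: "0 < b" "0 < n"
  shows "2 * \<epsilon> / b \<le> (\<Sum>w\<in>V. min (k1 w) (k2 w))"
proof -
  have fX: "finite X" "finite Y" using XY V finite_subset by auto
  have "card X + card Y = card (X \<union> Y) + card (X \<inter> Y)" using fX by (rule card_Un_Int)
  moreover have "card (X \<union> Y) \<le> n" using XY V by (metis card_mono le_sup_iff)
  ultimately have "real (card X) + real (card Y) \<le> real n + real (card (X \<inter> Y))" by linarith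
  then have cI: "2 * \<epsilon> * real n \<le> real (card (X \<inter> Y))" using cX cY by (simp add: algebra_simps)
  have "(\<Sum>w\<in>X \<inter> Y. min (k1 w) (k2 w)) \<le> (\<Sum>w\<in>V. min (k1 w) (k2 w))"
    using XY V k1 k2 by (intro sum_mono2) auto
  moreover have "(\<Sum>w\<in>X \<inter> Y. 1 / (b * real n)) \<le> (\<Sum>w\<in>X \<inter> Y. min (k1 w) (k2 w))"
    using k1 k2 by (intro sum_mono) auto
  moreover have "(\<Sum>w\<in>X \<inter> Y. 1 / (b * real n)) = real (card (X \<inter> Y)) / (b * real n)" by simp
  moreover have "2 * \<epsilon> / b \<le> real (card (X \<inter> Y)) / (b * real n)"
  proof -
    have "2 * \<epsilon> / b = (2 * \<epsilon> * real n) / (b * real n)" using bn by simp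
    also have "\<dots> \<le> real (card (X \<inter> Y)) / (b * real n)" using cI bn by (intro divide_right_mono) auto
    finally show ?thesis .
  qed
  ultimately show ?thesis by linarith
qed

lemma graph_rt2:
  assumes G: "eps_digraph n \<epsilon> V E" and M: "perfect_fractional_matching V E x" and B: "b_normal n b E x"
    and T: "bfs_oriented_tree m A" and v0: "v0 \<in> V" and e: "0 < \<epsilon>" and b: "0 < b" "2 * \<epsilon> \<le> b" and n: "0 < n"
  shows "rt2 V (Kc E x A) (tree_parent A) m v0 (2 * \<epsilon> / b)"
proof -
  have finV: "finite V" and cV: "card V = n" and EV: "E \<subseteq> V \<times> V"
    and deg: "\<And>v. v \<in> V \<Longrightarrow> (1/2 + \<epsilon>) * real n \<le> real (card (out_nbrs E v)) \<and> (1/2 + \<epsilon>) * real n \<le> real (card (in_nbrs E v))"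
    using G unfolding eps_digraph_def by auto
  have xnn: "\<And>u w. (u, w) \<in> E \<Longrightarrow> 0 \<le> x u w" using M unfolding perfect_fractional_matching_def by auto
  have xo: "\<And>v. v \<in> V \<Longrightarrow> (\<Sum>w\<in>out_nbrs E v. x v w) = 1" and xi: "\<And>v. v \<in> V \<Longrightarrow> (\<Sum>w\<in>in_nbrs E v. x w v) = 1"
    using M unfolding perfect_fractional_matching_def by auto
  have xl: "\<And>u w. (u, w) \<in> E \<Longrightarrow> 1 / (b * real n) \<le> x u w" using B unfolding b_normal_def by auto
  have outV: "out_nbrs E v \<subseteq> V" and inV: "in_nbrs E v \<subseteq> V" for v using EV unfolding out_nbrs_def in_nbrs_def by auto
  show ?thesis
  proof (unfold_locales)
    show "finite V" by (rule finV)
    show "v0 \<in> V" by (rule v0)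
    show "\<And>j. 1 \<le> j \<Longrightarrow> j \<le> m \<Longrightarrow> tree_parent A j < j" using tp[OF T] by blast
    show "\<And>j u w. 1 \<le> j \<Longrightarrow> j \<le> m \<Longrightarrow> u \<in> V \<Longrightarrow> w \<in> V \<Longrightarrow> 0 \<le> Kc E x A j u w"
      unfolding Kc_def using xnn by auto
    show "(\<Sum>w\<in>V. Kc E x A j u w) = 1" if "1 \<le> j" "j \<le> m" "u \<in> V" for j u
    proof (cases "(tree_parent A j, j) \<in> A")
      case True
      then have "(\<Sum>w\<in>V. Kc E x A j u w) = (\<Sum>w\<in>V. if (u, w) \<in> E then x u w else 0)"
        unfolding Kc_def by simp
      also have "\<dots> = (\<Sum>w\<in>out_nbrs E u. x u w)" by (rule out_sum[OF EV finV])
      finally show ?thesis using xo that by simp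
    next
      case False
      then have "(\<Sum>w\<in>V. Kc E x A j u w) = (\<Sum>w\<in>V. if (w, u) \<in> E then x w u else 0)"
        unfolding Kc_def by simp
      also have "\<dots> = (\<Sum>w\<in>in_nbrs E u. x w u)" by (rule in_sum[OF EV finV])
      finally show ?thesis using xi that by simp
    qed
    show "(\<Sum>u\<in>V. Kc E x A j u w) = 1" if "1 \<le> j" "j \<le> m" "w \<in> V" for j w
    proof (cases "(tree_parent A j, j) \<in> A")
      case True
      then have "(\<Sum>u\<in>V. Kc E x A j u w) = (\<Sum>u\<in>V. if (u, w) \<in> E then x u w else 0)"
        unfolding Kc_def by simp
      also have "\<dots> = (\<Sum>u\<in>in_nbrs E w. x u w)" by (rule in_sum[OF EV finV])
      finally show ?thesis using xi that by simp
    next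
      case False
      then have "(\<Sum>u\<in>V. Kc E x A j u w) = (\<Sum>u\<in>V. if (w, u) \<in> E then x w u else 0)"
        unfolding Kc_def by simp
      also have "\<dots> = (\<Sum>u\<in>out_nbrs E w. x w u)" by (rule out_sum[OF EV finV])
      finally show ?thesis using xo that by simp
    qed
    show "0 < 2 * \<epsilon> / b" using e b by simp
    show "2 * \<epsilon> / b \<le> 1" using b by simp
    fix j u u' assume j: "1 \<le> j" "j \<le> m" and u: "u \<in> V" "u' \<in> V"
    show "2 * \<epsilon> / b \<le> (\<Sum>w\<in>V. min (Kc E x A j u w) (Kc E x A j u' w))"
    proof (cases "(tree_parent A j, j) \<in> A")
      case True
      show ?thesis
        using overlap_gen[OF finV cV outV outV, of \<epsilon> u u' "\<lambda>w. Kc E x A j u w" b "\<lambda>w. Kc E x A j u' w"]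
          deg[OF u(1)] deg[OF u(2)] True xnn xl b n
        by (auto simp: Kc_def out_nbrs_def)
    next
      case False
      show ?thesis
        using overlap_gen[OF finV cV inV inV, of \<epsilon> u u' "\<lambda>w. Kc E x A j u w" b "\<lambda>w. Kc E x A j u' w"]
          deg[OF u(1)] deg[OF u(2)] False xnn xl b n
        by (auto simp: Kc_def in_nbrs_def)
    qed
  qed
qed


lemma (in rt2) conc:
  fixes g :: "nat \<Rightarrow> real" and Bd thr N L :: real
  assumes N: "N = real (card V)" and g: "\<And>w. w \<in> V \<Longrightarrow> 0 \<le> g w \<and> g w \<le> Bd" and Bd: "0 < Bd"
    and L: "\<And>c. c \<le> m \<Longrightarrow> oc c \<le> L"
    and c1: "2 * L \<le> thr / Bd" and c2: "thr / Bd \<le> real m + 1"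
    and c3: "2 * exp (- ((thr / Bd)^2 * \<theta> / (16 * L * (real m + 1)))) \<le> 1 / N^3"
  shows "Pr (\<lambda>f. thr \<le> \<bar>(\<Sum>j\<in>{0..m}. g (f j)) - (real m + 1) * (\<Sum>w\<in>V. g w) / N\<bar>) \<le> 1 / N^3"
proof -
  have N0: "0 < N" unfolding N using finV v0V card_gt_0_iff by fastforce
  define \<mu> where "\<mu> = (\<Sum>w\<in>V. g w) / N"
  define h where "h w = (g w - \<mu>) / Bd" for w
  have hs: "h u - h u' \<le> 1" if "u \<in> V" "u' \<in> V" for u u'
  proof -
    have "h u - h u' = (g u - g u') / Bd" unfolding h_def by (simp add: diff_divide_distrib)
    also have "\<dots> \<le> Bd / Bd" using g[OF that(1)] g[OF that(2)] Bd by (intro divide_right_mono) auto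
    finally show ?thesis using Bd by simp
  qed
  have h0: "(\<Sum>u\<in>V. h u) = 0"
  proof -
    have "(\<Sum>u\<in>V. h u) = ((\<Sum>u\<in>V. g u) - N * \<mu>) / Bd"
      unfolding h_def N by (simp add: sum_divide_distrib[symmetric] sum_subtractf)
    also have "N * \<mu> = (\<Sum>u\<in>V. g u)" unfolding \<mu>_def using N0 by simp
    finally show ?thesis by simp
  qed
  have eq: "(\<Sum>j\<in>{0..m}. h (f j)) = ((\<Sum>j\<in>{0..m}. g (f j)) - (real m + 1) * \<mu>) / Bd" for f
    unfolding h_def by (simp add: sum_divide_distrib[symmetric] sum_subtractf)
  have "Pr (\<lambda>f. thr \<le> \<bar>(\<Sum>j\<in>{0..m}. g (f j)) - (real m + 1) * (\<Sum>w\<in>V. g w) / N\<bar>)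
      \<le> Pr (\<lambda>f. thr / Bd \<le> \<bar>\<Sum>j\<in>{0..m}. h (f j)\<bar>)"
  proof (rule Pr_mono)
    fix f assume a: "thr \<le> \<bar>(\<Sum>j\<in>{0..m}. g (f j)) - (real m + 1) * (\<Sum>w\<in>V. g w) / N\<bar>"
    have "\<bar>\<Sum>j\<in>{0..m}. h (f j)\<bar> = \<bar>(\<Sum>j\<in>{0..m}. g (f j)) - (real m + 1) * \<mu>\<bar> / Bd"
      unfolding eq using Bd by simp
    moreover have "(real m + 1) * \<mu> = (real m + 1) * (\<Sum>w\<in>V. g w) / N" unfolding \<mu>_def by simp
    ultimately show "thr / Bd \<le> \<bar>\<Sum>j\<in>{0..m}. h (f j)\<bar>" using a Bd by (simp add: divide_right_mono)
  qed
  also have "\<dots> \<le> 2 * exp (- ((thr / Bd)^2 * \<theta> / (16 * L * (real m + 1))))"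
    using tail2[OF hs h0 L c1 c2] by blast
  also have "\<dots> \<le> 1 / N^3" by (rule c3)
  finally show ?thesis .
qed

lemma sum_img:
  assumes "inj_on f I" "finite I"
  shows "(\<Sum>w\<in>X \<inter> f ` I. \<phi> w) = (\<Sum>j\<in>I. if f j \<in> X then \<phi> (f j) else 0)"
proof -
  have "(\<Sum>w\<in>X \<inter> f ` I. \<phi> w) = (\<Sum>w\<in>f ` I \<inter> X. \<phi> w)" by (simp add: Int_commute)
  also have "\<dots> = (\<Sum>w\<in>f ` I. if w \<in> X then \<phi> w else 0)" using assms by (simp add: sum.inter_restrict)
  also have "\<dots> = (\<Sum>j\<in>I. if f j \<in> X then \<phi> (f j) else 0)" using assms by (simp add: sum.reindex)
  finally show ?thesis .
qed

lemma sum_ind: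
  assumes "finite V" "X \<subseteq> V"
  shows "(\<Sum>w\<in>V. if w \<in> X then F w else 0) = (\<Sum>w\<in>X. F w)"
proof -
  have "(\<Sum>w\<in>X. F w) = (\<Sum>w\<in>V \<inter> X. F w)" using assms by (simp add: Int_absorb1)
  also have "\<dots> = (\<Sum>w\<in>V. if w \<in> X then F w else 0)" using assms by (simp add: sum.inter_restrict)
  finally show ?thesis by simp
qed


lemma xlog_bound:
  fixes x0 b N :: real
  assumes "1 / (b * N) \<le> x0" "x0 \<le> b / N" "b / N \<le> 1" "0 < b" "0 < N"
  shows "0 \<le> x0 * log 2 (1 / x0) \<and> x0 * log 2 (1 / x0) \<le> b / N * log 2 (b * N)"
proof -
  have x0: "0 < x0" using assms by (smt (verit) divide_pos_pos mult_pos_pos)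
  have x1: "x0 \<le> 1" using assms(2,3) by linarith
  have "1 \<le> 1 / x0" using x0 x1 by simp
  then have l0: "0 \<le> log 2 (1 / x0)" using x0 by (subst zero_le_log_cancel_iff) auto
  have "1 / x0 \<le> b * N" using assms x0 by (simp add: field_simps)
  moreover have "0 < b * N" using assms by simp
  ultimately have l1: "log 2 (1 / x0) \<le> log 2 (b * N)" using x0 by (subst log_le_cancel_iff) auto
  have bN: "0 \<le> b / N" using x0 assms(2) by simp
  show ?thesis
  proof
    show "0 \<le> x0 * log 2 (1 / x0)" using x0 l0 by simp
    show "x0 * log 2 (1 / x0) \<le> b / N * log 2 (b * N)" using mult_mono[OF assms(2) l1 bN l0] .
  qed
qed

lemma main:
  fixes \<epsilon> b \<Delta> \<alpha> aS cc :: real and n m v0 :: nat and V :: "nat set" and E A :: "(nat \<times> nat) set"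
    and x :: "nat \<Rightarrow> nat \<Rightarrow> real" and SS :: "nat set set"
  assumes G: "eps_digraph n \<epsilon> V E" and M: "perfect_fractional_matching V E x" and B: "b_normal n b E x"
    and T: "bfs_oriented_tree m A" and TD: "\<forall>i\<in>{0..m}. real (tree_degree A i) \<le> \<Delta>"
    and v0: "v0 \<in> V" and SS: "SS \<subseteq> Pow V" "card SS \<le> n^2"
    and e: "0 < \<epsilon>" and b: "2 \<le> b" "2 * \<epsilon> \<le> b" and n: "0 < n" "b \<le> real n"
    and al: "0 < \<alpha>" "\<alpha> \<le> 1" and D1: "1 \<le> \<Delta>" and Dal: "\<Delta> powr (1 - \<alpha>) * (1 - 2 * \<epsilon> / b) \<le> 1 - (2 * \<epsilon> / b) / 2"
    and num: "\<And>Aa. Aa \<in> {aS, cc / (b / real n), cc / (b / real n * log 2 (b * real n))} \<Longrightarrow>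
        2 * ((2 / (2 * \<epsilon> / b)) * (real m + 1) powr \<alpha>) \<le> Aa \<and> Aa \<le> real m + 1 \<and>
        2 * exp (- (Aa^2 * (2 * \<epsilon> / b) / (16 * ((2 / (2 * \<epsilon> / b)) * (real m + 1) powr \<alpha>) * (real m + 1)))) \<le> 1 / real n ^ 3"
  shows "random_tree_prob V E x m A v0 (\<lambda>f. self_avoiding m f \<and> S_a_c_expected n V E x SS aS cc (f ` {0..m}))
     \<ge> 1 - real m ^ 2 * b / real n - real n ^ 2 * (1 / real n ^ 3) - 4 * real n * (1 / real n ^ 3)"
proof -
  define \<theta> where "\<theta> = 2 * \<epsilon> / b"
  define N where "N = real n"
  interpret R: rt2 V "Kc E x A" "tree_parent A" m v0 \<theta>
    unfolding \<theta>_def using graph_rt2[OF G M B T v0 e _ b(2) n(1)] b by simp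
  have finV: "finite V" and cV: "card V = n" and EV: "E \<subseteq> V \<times> V"
    using G unfolding eps_digraph_def by auto
  have NV: "N = real (card V)" unfolding N_def cV ..
  have N0: "0 < N" unfolding N_def using n by simp
  have bN: "b / N \<le> 1" unfolding N_def using n b by simp
  have xnn: "\<And>u w. (u, w) \<in> E \<Longrightarrow> 0 \<le> x u w" using M unfolding perfect_fractional_matching_def by auto
  have xo: "\<And>v. v \<in> V \<Longrightarrow> (\<Sum>w\<in>out_nbrs E v. x v w) = 1" and xi: "\<And>v. v \<in> V \<Longrightarrow> (\<Sum>w\<in>in_nbrs E v. x w v) = 1"
    using M unfolding perfect_fractional_matching_def by auto
  have xl: "\<And>u w. (u, w) \<in> E \<Longrightarrow> 1 / (b * N) \<le> x u w" and xu: "\<And>u w. (u, w) \<in> E \<Longrightarrow> x u w \<le> b / N"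
    using B unfolding b_normal_def N_def by auto
  have outV: "out_nbrs E v \<subseteq> V" and inV: "in_nbrs E v \<subseteq> V" for v using EV unfolding out_nbrs_def in_nbrs_def by auto
  define L where "L = (2 / \<theta>) * (real m + 1) powr \<alpha>"
  have degC: "real (card (R.C j)) \<le> \<Delta>" if "j \<le> m" for j
  proof -
    have sub: "R.C j \<subseteq> {c. (j, c) \<in> A \<or> (c, j) \<in> A}"
    proof
      fix c assume c: "c \<in> R.C j"
      then have "1 \<le> c" "c \<le> m" "tree_parent A c = j" by (auto dest: R.C_D)
      then show "c \<in> {c. (j, c) \<in> A \<or> (c, j) \<in> A}" using tp[OF T, of c] by auto
    qed
    have fin: "finite {c. (j, c) \<in> A \<or> (c, j) \<in> A}"
    proof -
      have "{c. (j, c) \<in> A \<or> (c, j) \<in> A} \<subseteq> {0..m}" using T unfolding bfs_oriented_tree_def by auto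
      then show ?thesis by (rule finite_subset) simp
    qed
    have "card (R.C j) \<le> tree_degree A j" unfolding tree_degree_def by (rule card_mono[OF fin sub])
    then show ?thesis using TD that by force
  qed
  have ocL: "R.oc c \<le> L" if "c \<le> m" for c
    unfolding L_def using R.oc_max[OF degC al D1 _ that] Dal unfolding \<theta>_def by simp
  have numL: "2 * L \<le> Aa \<and> Aa \<le> real m + 1 \<and> 2 * exp (- (Aa^2 * \<theta> / (16 * L * (real m + 1)))) \<le> 1 / N ^ 3"
    if "Aa \<in> {aS, cc / (b / N), cc / (b / N * log 2 (b * N))}" for Aa
    using num[of Aa] that unfolding L_def \<theta>_def N_def by simp
  have P_eq: "random_tree_prob V E x m A v0 P = R.Pr P" for P
  proof -
    have s: "{f \<in> {0..m} \<rightarrow>\<^sub>E V. f 0 = v0 \<and> P f} = {f \<in> R.Om m. P f}" unfolding R.Om_def by auto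
    show ?thesis
      unfolding random_tree_prob_def R.Pr_def s using R.finite_Om
      by (simp add: sum.inter_filter R.W_def rt_weight_Kc) (rule sum.cong, auto)
  qed
  define gS where "gS (S::nat set) (w::nat) = (if w \<in> S then 1 else (0::real))" for S w
  define g1 where "g1 v w = (if w \<in> out_nbrs E v then x v w else 0)" for v w
  define g2 where "g2 v w = (if w \<in> out_nbrs E v then x v w * log 2 (1 / x v w) else 0)" for v w
  define g3 where "g3 v w = (if w \<in> in_nbrs E v then x w v else 0)" for v w
  define g4 where "g4 v w = (if w \<in> in_nbrs E v then x w v * log 2 (1 / x w v) else 0)" for v w
  define dev where "dev g f = \<bar>(\<Sum>j\<in>{0..m}. g (f j)) - (real m + 1) * (\<Sum>w\<in>V. g w) / N\<bar>" for g f
  have bN0: "0 < b / N" using b N0 by simp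
  have lg0: "0 < log 2 (b * N)"
  proof -
    have N1: "1 \<le> N" using n unfolding N_def by simp
    have "2 * 1 \<le> b * N" using mult_mono[OF b(1) N1] b by simp
    then have "1 < b * N" by simp
    then show ?thesis by simp
  qed
  have bN1: "0 \<le> b / N" using bN0 by simp
  define Bl where "Bl = b / N * log 2 (b * N)"
  have bN2: "0 < Bl" unfolding Bl_def using bN0 lg0 by (intro mult_pos_pos) auto
  have gx: "0 \<le> x v w \<and> x v w \<le> b / N" if "(v, w) \<in> E" for v w using xnn xu that by auto
  have gxl: "0 \<le> x v w * log 2 (1 / x v w) \<and> x v w * log 2 (1 / x v w) \<le> Bl" if "(v, w) \<in> E" for v w
    unfolding Bl_def using xlog_bound[OF xl[OF that] xu[OF that] bN] b N0 by simp
  have PS: "R.Pr (\<lambda>f. aS \<le> dev (gS S) f) \<le> 1 / N^3" for S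
    unfolding dev_def using numL[of aS]
    by (intro R.conc[OF NV, where Bd=1 and L=L]) (auto simp: gS_def ocL)
  have P1: "R.Pr (\<lambda>f. cc \<le> dev (g1 v) f) \<le> 1 / N^3" for v
    unfolding dev_def using numL[of "cc / (b / N)"]
    by (intro R.conc[OF NV, where Bd="b / N" and L=L]) (auto simp: g1_def ocL bN0 bN1 out_nbrs_def gx)
  have P2: "R.Pr (\<lambda>f. cc \<le> dev (g2 v) f) \<le> 1 / N^3" for v
    unfolding dev_def using numL[of "cc / Bl"] unfolding Bl_def[symmetric]
    by (intro R.conc[OF NV, where Bd="Bl" and L=L]) (auto simp: g2_def ocL bN2 less_imp_le[OF bN2] out_nbrs_def gxl)
  have P3: "R.Pr (\<lambda>f. cc \<le> dev (g3 v) f) \<le> 1 / N^3" for v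
    unfolding dev_def using numL[of "cc / (b / N)"]
    by (intro R.conc[OF NV, where Bd="b / N" and L=L]) (auto simp: g3_def ocL bN0 bN1 in_nbrs_def gx)
  have P4: "R.Pr (\<lambda>f. cc \<le> dev (g4 v) f) \<le> 1 / N^3" for v
    unfolding dev_def using numL[of "cc / Bl"] unfolding Bl_def[symmetric]
    by (intro R.conc[OF NV, where Bd="Bl" and L=L]) (auto simp: g4_def ocL bN2 less_imp_le[OF bN2] in_nbrs_def gxl)
  have KB: "Kc E x A j u w \<le> b / N" if "u \<in> V" "w \<in> V" for j u w
    unfolding Kc_def using xu bN0 by auto
  have PSA: "R.Pr (\<lambda>f. \<not> inj_on f {0..m}) \<le> real m ^ 2 * (b / N)"
    using R.SA_bound[of "b / N"] KB by blast
  define Bad where "Bad f \<longleftrightarrow> \<not> inj_on f {0..m} \<or> (\<exists>S\<in>SS. aS \<le> dev (gS S) f) \<or>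
     (\<exists>v\<in>V. cc \<le> dev (g1 v) f) \<or> (\<exists>v\<in>V. cc \<le> dev (g2 v) f) \<or>
     (\<exists>v\<in>V. cc \<le> dev (g3 v) f) \<or> (\<exists>v\<in>V. cc \<le> dev (g4 v) f)" for f
  have good: "self_avoiding m f \<and> S_a_c_expected n V E x SS aS cc (f ` {0..m})" if nb: "\<not> Bad f" for f
  proof -
    have inj: "inj_on f {0..m}" using nb unfolding Bad_def by auto
    have cM: "real (card (f ` {0..m})) = real m + 1" using inj by (simp add: card_image)
    have sums: "(\<Sum>w\<in>X \<inter> f ` {0..m}. \<phi> w) = (\<Sum>j\<in>{0..m}. if f j \<in> X then \<phi> (f j) else 0)" for X \<phi>
      using sum_img[OF inj] by simp
    have "sets_expected n SS aS (f ` {0..m})"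
      unfolding sets_expected_def
    proof
      fix S assume S: "S \<in> SS"
      have SV: "S \<subseteq> V" using S SS by auto
      have c1: "real (card (f ` {0..m} \<inter> S)) = (\<Sum>j\<in>{0..m}. gS S (f j))"
      proof -
        have "real (card (f ` {0..m} \<inter> S)) = (\<Sum>w\<in>S \<inter> f ` {0..m}. 1)" by (simp add: Int_commute)
        also have "\<dots> = (\<Sum>j\<in>{0..m}. gS S (f j))" unfolding sums gS_def by simp
        finally show ?thesis .
      qed
      have c2: "(\<Sum>w\<in>V. gS S w) = real (card S)"
        unfolding gS_def using sum_ind[OF finV SV, of "\<lambda>_. 1::real"] by simp
      have "\<not> aS \<le> dev (gS S) f" using nb S unfolding Bad_def by auto
      then show "\<bar>real (card (f ` {0..m} \<inter> S)) - real (card (f ` {0..m})) / real n * real (card S)\<bar> < aS"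
        unfolding dev_def c1 c2 cM N_def by simp
    qed
    moreover have "c_expected n V E x cc (f ` {0..m})"
      unfolding c_expected_def
    proof (intro ballI conjI)
      fix v assume v: "v \<in> V"
      have s1: "(\<Sum>w\<in>out_nbrs E v \<inter> f ` {0..m}. x v w) = (\<Sum>j\<in>{0..m}. g1 v (f j))" unfolding sums g1_def ..
      have s2: "(\<Sum>w\<in>out_nbrs E v \<inter> f ` {0..m}. x v w * log 2 (1 / x v w)) = (\<Sum>j\<in>{0..m}. g2 v (f j))" unfolding sums g2_def ..
      have s3: "(\<Sum>w\<in>in_nbrs E v \<inter> f ` {0..m}. x w v) = (\<Sum>j\<in>{0..m}. g3 v (f j))" unfolding sums g3_def ..
      have s4: "(\<Sum>w\<in>in_nbrs E v \<inter> f ` {0..m}. x w v * log 2 (1 / x w v)) = (\<Sum>j\<in>{0..m}. g4 v (f j))" unfolding sums g4_def ..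
      have t1: "(\<Sum>w\<in>V. g1 v w) = 1" unfolding g1_def sum_ind[OF finV outV] using xo v by simp
      have t2: "(\<Sum>w\<in>V. g2 v w) = h_out E x v" unfolding g2_def sum_ind[OF finV outV] h_out_def ..
      have t3: "(\<Sum>w\<in>V. g3 v w) = 1" unfolding g3_def sum_ind[OF finV inV] using xi v by simp
      have t4: "(\<Sum>w\<in>V. g4 v w) = h_in E x v" unfolding g4_def sum_ind[OF finV inV] h_in_def ..
      have n1: "\<not> cc \<le> dev (g1 v) f" "\<not> cc \<le> dev (g2 v) f" "\<not> cc \<le> dev (g3 v) f" "\<not> cc \<le> dev (g4 v) f"
        using nb v unfolding Bad_def by auto
      show "\<bar>(\<Sum>w\<in>out_nbrs E v \<inter> f ` {0..m}. x v w) - real (card (f ` {0..m})) / real n\<bar> < cc"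
        using n1(1) unfolding dev_def s1 t1 cM N_def by simp
      show "\<bar>(\<Sum>w\<in>out_nbrs E v \<inter> f ` {0..m}. x v w * log 2 (1 / x v w)) - real (card (f ` {0..m})) / real n * h_out E x v\<bar> < cc"
        using n1(2) unfolding dev_def s2 t2 cM N_def by simp
      show "\<bar>(\<Sum>w\<in>in_nbrs E v \<inter> f ` {0..m}. x w v) - real (card (f ` {0..m})) / real n\<bar> < cc"
        using n1(3) unfolding dev_def s3 t3 cM N_def by simp
      show "\<bar>(\<Sum>w\<in>in_nbrs E v \<inter> f ` {0..m}. x w v * log 2 (1 / x w v)) - real (card (f ` {0..m})) / real n * h_in E x v\<bar> < cc"
        using n1(4) unfolding dev_def s4 t4 cM N_def by simp
    qed
    ultimately show ?thesis using inj unfolding self_avoiding_def S_a_c_expected_def by simp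
  qed
  have finSS: "finite SS" using SS finV by (meson finite_Pow_iff finite_subset)
  have "R.Pr Bad \<le> R.Pr (\<lambda>f. \<not> inj_on f {0..m}) + (R.Pr (\<lambda>f. \<exists>S\<in>SS. aS \<le> dev (gS S) f) +
     (R.Pr (\<lambda>f. \<exists>v\<in>V. cc \<le> dev (g1 v) f) + (R.Pr (\<lambda>f. \<exists>v\<in>V. cc \<le> dev (g2 v) f) +
     (R.Pr (\<lambda>f. \<exists>v\<in>V. cc \<le> dev (g3 v) f) + R.Pr (\<lambda>f. \<exists>v\<in>V. cc \<le> dev (g4 v) f)))))"
    unfolding Bad_def
    by (rule order_trans[OF R.Pr_disj add_left_mono] order_trans[OF R.Pr_disj add_left_mono] R.Pr_disj)+
  also have "\<dots> \<le> real m ^ 2 * (b / N) + (real (card SS) * (1 / N^3) + (N * (1 / N^3) + (N * (1 / N^3) + (N * (1 / N^3) + N * (1 / N^3)))))"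
  proof -
    have a: "R.Pr (\<lambda>f. \<exists>S\<in>SS. aS \<le> dev (gS S) f) \<le> real (card SS) * (1 / N^3)"
      using order_trans[OF R.Pr_Ex[OF finSS] sum_mono[OF PS]] by simp
    have bb: "R.Pr (\<lambda>f. \<exists>v\<in>V. cc \<le> dev (g v) f) \<le> N * (1 / N^3)"
      if "\<And>v. R.Pr (\<lambda>f. cc \<le> dev (g v) f) \<le> 1 / N^3" for g
      using order_trans[OF R.Pr_Ex[OF finV] sum_mono[OF that]] NV by simp
    show ?thesis using PSA a bb[where g=g1, OF P1] bb[where g=g2, OF P2] bb[where g=g3, OF P3] bb[where g=g4, OF P4] by linarith
  qed
  also have "\<dots> \<le> real m ^ 2 * b / N + N^2 * (1 / N^3) + 4 * N * (1 / N^3)"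
  proof -
    have "real (card SS) \<le> N^2" using SS unfolding N_def by (metis of_nat_le_iff of_nat_power)
    then have "real (card SS) * (1 / N^3) \<le> N^2 * (1 / N^3)" using N0 by (intro mult_right_mono) auto
    then show ?thesis by simp
  qed
  finally have PB: "R.Pr Bad \<le> real m ^ 2 * b / N + N^2 * (1 / N^3) + 4 * N * (1 / N^3)" .
  have "R.Pr (\<lambda>f. \<not> Bad f) \<le> R.Pr (\<lambda>f. self_avoiding m f \<and> S_a_c_expected n V E x SS aS cc (f ` {0..m}))"
    using good by (intro R.Pr_mono) auto
  then show ?thesis unfolding P_eq using R.Pr_compl[of Bad] PB unfolding N_def by linarith
qed


lemma div_le_self_r: "0 \<le> (a::real) \<Longrightarrow> 1 \<le> d \<Longrightarrow> a / d \<le> a"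
  using frac_le[of a a 1 d] by simp

lemma final_ineq:
  fixes b \<gamma> N r :: real and m :: nat
  assumes N: "0 < N" "ln N = r^2" and r: "0 \<le> r" and b: "0 < b"
    and M: "real (m + 1) \<le> 3 * exp (\<gamma> * r) * N powr (1/4)"
    and E6: "9 * b * exp (2*\<gamma>*r) * exp (- (r^2/2)) + exp (- (r^2)) + 4 * exp (- (2 * r^2)) \<le> exp (- (r^2/3))"
  shows "1 - real m ^ 2 * b / N - N ^ 2 * (1 / N ^ 3) - 4 * N * (1 / N ^ 3) \<ge> 1 - N powr (-1/3)"
proof -
  have pw: "N powr a = exp (a * r^2)" for a using N by (simp add: powr_def)
  have Ne: "N = exp (r^2)" using N by (metis exp_ln)
  have "real m \<le> 3 * exp (\<gamma> * r) * exp (r^2 / 4)" using M unfolding pw by simp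
  then have "(real m)^2 \<le> (3 * exp (\<gamma> * r) * exp (r^2 / 4))^2" by (intro power_mono) auto
  also have "\<dots> = 9 * exp (2 * \<gamma> * r) * exp (r^2 / 2)"
    by (simp add: power_mult_distrib exp_double[symmetric] algebra_simps power2_eq_square exp_add[symmetric])
  finally have m2: "(real m)^2 \<le> 9 * exp (2 * \<gamma> * r) * exp (r^2 / 2)" .
  have "real m ^ 2 * b / N \<le> 9 * exp (2 * \<gamma> * r) * exp (r^2 / 2) * b / N"
    using m2 b N by (intro divide_right_mono mult_right_mono) auto
  also have "\<dots> = 9 * b * exp (2*\<gamma>*r) * exp (- (r^2/2))"
    unfolding Ne by (simp add: exp_minus field_simps exp_add[symmetric])
  finally have t1: "real m ^ 2 * b / N \<le> 9 * b * exp (2*\<gamma>*r) * exp (- (r^2/2))" .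
  have t2: "N ^ 2 * (1 / N ^ 3) = exp (- (r^2))"
    unfolding Ne by (simp add: exp_minus power2_eq_square power3_eq_cube field_simps)
  have t3: "4 * N * (1 / N ^ 3) = 4 * exp (- (2 * r^2))"
  proof -
    have "exp (- (2 * r^2)) = 1 / (exp (r^2) * exp (r^2))" by (simp add: exp_minus exp_add[symmetric] inverse_eq_divide)
    then show ?thesis unfolding Ne by (simp add: power3_eq_cube field_simps)
  qed
  have t4: "N powr (-1/3) = exp (- (r^2/3))" unfolding pw by simp
  show ?thesis using t1 t2 t3 t4 E6 by linarith
qed

lemma powr_split:
  fixes N r k :: real
  assumes N: "0 < N" "ln N = r^2" and r: "0 < r" and k: "0 < k"
  shows "N powr (1/4 - 1 / (k * r)) = N powr (1/4) * exp (- r / k)"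
    "N powr (- 3/4 - 1 / (k * r)) = N powr (1/4) * exp (- r / k) / N"
proof -
  have pw: "N powr a = exp (a * r^2)" for a using N by (simp add: powr_def)
  have Ne: "N = exp (r^2)" using N by (metis exp_ln)
  have e1: "(1/4 - 1 / (k * r)) * r^2 = 1/4 * r^2 + (- r / k)" using r k by (simp add: field_simps power2_eq_square)
  show "N powr (1/4 - 1 / (k * r)) = N powr (1/4) * exp (- r / k)"
    unfolding pw e1 by (simp only: exp_add)
  have e2: "(- 3/4 - 1 / (k * r)) * r^2 = (1/4 * r^2 + (- r / k)) - r^2" using r k by (simp add: field_simps power2_eq_square)
  have "N powr (- 3/4 - 1 / (k * r)) = exp (1/4 * r^2) * exp (- r / k) / exp (r^2)"
    unfolding pw e2 by (simp only: exp_add exp_diff)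
  then show "N powr (- 3/4 - 1 / (k * r)) = N powr (1/4) * exp (- r / k) / N"
    unfolding pw using Ne by simp
qed

theorem corollary5p7:
  "\<forall>\<epsilon>::real. 0 < \<epsilon> \<and> \<epsilon> \<le> 1 \<longrightarrow>
   (\<exists>b0::real. \<forall>b::real. b \<ge> b0 \<longrightarrow>
   (\<exists>\<gamma>0::real. \<gamma>0 > 0 \<and> (\<forall>\<gamma>::real. 0 < \<gamma> \<and> \<gamma> \<le> \<gamma>0 \<longrightarrow>
   (\<exists>n0::nat. \<forall>n::nat. n \<ge> n0 \<longrightarrow>
   (\<forall>(V::nat set) (E::(nat \<times> nat) set) (x::nat \<Rightarrow> nat \<Rightarrow> real) (m::nat)
      (A::(nat \<times> nat) set) (v0::nat) (\<S>::nat set set).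
      eps_digraph n \<epsilon> V E \<longrightarrow>
      perfect_fractional_matching V E x \<longrightarrow>
      b_normal n b E x \<longrightarrow>
      bfs_oriented_tree m A \<longrightarrow>
      (\<forall>i\<in>{0..m}. real (tree_degree A i) \<le> exp (\<gamma> * sqrt (ln (real n)))) \<longrightarrow>
      real n powr (1/4) + 1 \<le> real (m + 1) \<longrightarrow>
      real (m + 1) \<le> 3 * exp (\<gamma> * sqrt (ln (real n))) * real n powr (1/4) \<longrightarrow>
      v0 \<in> V \<longrightarrow>
      \<S> \<subseteq> Pow V \<longrightarrow> card \<S> \<le> n^2 \<longrightarrow>
      (let P = random_tree_prob V E x m A v0
             (\<lambda>f. self_avoiding m f \<and>
                  S_a_c_expected n V E x \<S>
                    (real n powr (1/4 - 1 / (17 * sqrt (ln (real n)))))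
                    (real n powr (- 3/4 - 1 / (18 * sqrt (ln (real n)))))
                    (f ` {0..m}))
       in P \<ge> 1 - real m ^ 2 * b / real n - real n ^ 2 * (1 / real n ^ 3) - 4 * real n * (1 / real n ^ 3)
          \<and> 1 - real m ^ 2 * b / real n - real n ^ 2 * (1 / real n ^ 3) - 4 * real n * (1 / real n ^ 3)
              \<ge> 1 - real n powr (-1/3)))))))"
proof (intro allI impI)
  fix \<epsilon> :: real assume \<epsilon>: "0 < \<epsilon> \<and> \<epsilon> \<le> 1"
  show "\<exists>b0::real. \<forall>b::real. b \<ge> b0 \<longrightarrow>
   (\<exists>\<gamma>0::real. \<gamma>0 > 0 \<and> (\<forall>\<gamma>::real. 0 < \<gamma> \<and> \<gamma> \<le> \<gamma>0 \<longrightarrow>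
   (\<exists>n0::nat. \<forall>n::nat. n \<ge> n0 \<longrightarrow>
   (\<forall>(V::nat set) (E::(nat \<times> nat) set) (x::nat \<Rightarrow> nat \<Rightarrow> real) (m::nat)
      (A::(nat \<times> nat) set) (v0::nat) (\<S>::nat set set).
      eps_digraph n \<epsilon> V E \<longrightarrow>
      perfect_fractional_matching V E x \<longrightarrow>
      b_normal n b E x \<longrightarrow>
      bfs_oriented_tree m A \<longrightarrow>
      (\<forall>i\<in>{0..m}. real (tree_degree A i) \<le> exp (\<gamma> * sqrt (ln (real n)))) \<longrightarrow>
      real n powr (1/4) + 1 \<le> real (m + 1) \<longrightarrow>
      real (m + 1) \<le> 3 * exp (\<gamma> * sqrt (ln (real n))) * real n powr (1/4) \<longrightarrow>
      v0 \<in> V \<longrightarrow>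
      \<S> \<subseteq> Pow V \<longrightarrow> card \<S> \<le> n^2 \<longrightarrow>
      (let P = random_tree_prob V E x m A v0
             (\<lambda>f. self_avoiding m f \<and>
                  S_a_c_expected n V E x \<S>
                    (real n powr (1/4 - 1 / (17 * sqrt (ln (real n)))))
                    (real n powr (- 3/4 - 1 / (18 * sqrt (ln (real n)))))
                    (f ` {0..m}))
       in P \<ge> 1 - real m ^ 2 * b / real n - real n ^ 2 * (1 / real n ^ 3) - 4 * real n * (1 / real n ^ 3)
          \<and> 1 - real m ^ 2 * b / real n - real n ^ 2 * (1 / real n ^ 3) - 4 * real n * (1 / real n ^ 3)
              \<ge> 1 - real n powr (-1/3))))))"
  proof (rule exI[of _ 2], intro allI impI)
    fix b :: real assume b: "2 \<le> b"
    define \<theta> where "\<theta> = 2 * \<epsilon> / b"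
    have th: "0 < \<theta>" "\<theta> \<le> 1" unfolding \<theta>_def using \<epsilon> b by auto
    show "\<exists>\<gamma>0::real. \<gamma>0 > 0 \<and> (\<forall>\<gamma>::real. 0 < \<gamma> \<and> \<gamma> \<le> \<gamma>0 \<longrightarrow>
   (\<exists>n0::nat. \<forall>n::nat. n \<ge> n0 \<longrightarrow>
   (\<forall>(V::nat set) (E::(nat \<times> nat) set) (x::nat \<Rightarrow> nat \<Rightarrow> real) (m::nat)
      (A::(nat \<times> nat) set) (v0::nat) (\<S>::nat set set).
      eps_digraph n \<epsilon> V E \<longrightarrow>
      perfect_fractional_matching V E x \<longrightarrow>
      b_normal n b E x \<longrightarrow>
      bfs_oriented_tree m A \<longrightarrow>
      (\<forall>i\<in>{0..m}. real (tree_degree A i) \<le> exp (\<gamma> * sqrt (ln (real n)))) \<longrightarrow>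
      real n powr (1/4) + 1 \<le> real (m + 1) \<longrightarrow>
      real (m + 1) \<le> 3 * exp (\<gamma> * sqrt (ln (real n))) * real n powr (1/4) \<longrightarrow>
      v0 \<in> V \<longrightarrow>
      \<S> \<subseteq> Pow V \<longrightarrow> card \<S> \<le> n^2 \<longrightarrow>
      (let P = random_tree_prob V E x m A v0
             (\<lambda>f. self_avoiding m f \<and>
                  S_a_c_expected n V E x \<S>
                    (real n powr (1/4 - 1 / (17 * sqrt (ln (real n)))))
                    (real n powr (- 3/4 - 1 / (18 * sqrt (ln (real n)))))
                    (f ` {0..m}))
       in P \<ge> 1 - real m ^ 2 * b / real n - real n ^ 2 * (1 / real n ^ 3) - 4 * real n * (1 / real n ^ 3)
          \<and> 1 - real m ^ 2 * b / real n - real n ^ 2 * (1 / real n ^ 3) - 4 * real n * (1 / real n ^ 3)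
              \<ge> 1 - real n powr (-1/3)))))"
    proof (rule exI[of _ "min (1/4) (\<theta>/64)"], intro conjI allI impI)
      show "0 < min (1/4) (\<theta>/64)" using th by simp
      fix \<gamma> :: real assume \<gamma>: "0 < \<gamma> \<and> \<gamma> \<le> min (1/4) (\<theta>/64)"
      have g: "0 < \<gamma>" "\<gamma> \<le> 1/4" "\<gamma> \<le> \<theta>/64" using \<gamma> by auto
      obtain R where R1: "R \<ge> 1" and R: "\<And>r. r \<ge> R \<Longrightarrow> 2 \<le> exp (r^2) \<and> b \<le> exp (r^2) \<and> \<theta> / (4 * \<gamma> * r) < 1 \<and>
         (12 / \<theta>) * exp (-3*r) * (b * ((ln b + r^2) / ln 2)) \<le> exp (- r / 17) \<and>
         3 * r^2 + 1 \<le> \<theta>^2 * exp (2*r) * exp (- r / 17)^2 / (288 * (b * ((ln b + r^2) / ln 2))^2) \<and>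
         9 * b * exp (2*\<gamma>*r) * exp (- (r^2/2)) + exp (- (r^2)) + 4 * exp (- (2 * r^2)) \<le> exp (- (r^2/3))"
        using asym[OF th g(1,2) b] by blast
      show "\<exists>n0::nat. \<forall>n::nat. n \<ge> n0 \<longrightarrow>
   (\<forall>(V::nat set) (E::(nat \<times> nat) set) (x::nat \<Rightarrow> nat \<Rightarrow> real) (m::nat)
      (A::(nat \<times> nat) set) (v0::nat) (\<S>::nat set set).
      eps_digraph n \<epsilon> V E \<longrightarrow>
      perfect_fractional_matching V E x \<longrightarrow>
      b_normal n b E x \<longrightarrow>
      bfs_oriented_tree m A \<longrightarrow>
      (\<forall>i\<in>{0..m}. real (tree_degree A i) \<le> exp (\<gamma> * sqrt (ln (real n)))) \<longrightarrow>
      real n powr (1/4) + 1 \<le> real (m + 1) \<longrightarrow>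
      real (m + 1) \<le> 3 * exp (\<gamma> * sqrt (ln (real n))) * real n powr (1/4) \<longrightarrow>
      v0 \<in> V \<longrightarrow>
      \<S> \<subseteq> Pow V \<longrightarrow> card \<S> \<le> n^2 \<longrightarrow>
      (let P = random_tree_prob V E x m A v0
             (\<lambda>f. self_avoiding m f \<and>
                  S_a_c_expected n V E x \<S>
                    (real n powr (1/4 - 1 / (17 * sqrt (ln (real n)))))
                    (real n powr (- 3/4 - 1 / (18 * sqrt (ln (real n)))))
                    (f ` {0..m}))
       in P \<ge> 1 - real m ^ 2 * b / real n - real n ^ 2 * (1 / real n ^ 3) - 4 * real n * (1 / real n ^ 3)
          \<and> 1 - real m ^ 2 * b / real n - real n ^ 2 * (1 / real n ^ 3) - 4 * real n * (1 / real n ^ 3)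
              \<ge> 1 - real n powr (-1/3)))"
      proof (rule exI[of _ "nat \<lceil>exp (R^2)\<rceil>"], intro allI impI)
        fix n V E x m A v0 SS
        assume n0: "nat \<lceil>exp (R^2)\<rceil> \<le> n"
          and G: "eps_digraph n \<epsilon> V E" and M: "perfect_fractional_matching V E x" and B: "b_normal n b E x"
          and T: "bfs_oriented_tree m A"
          and TD: "\<forall>i\<in>{0..m}. real (tree_degree A i) \<le> exp (\<gamma> * sqrt (ln (real n)))"
          and M1: "real n powr (1/4) + 1 \<le> real (m + 1)"
          and M2: "real (m + 1) \<le> 3 * exp (\<gamma> * sqrt (ln (real n))) * real n powr (1/4)"
          and v0: "v0 \<in> V" and SS: "SS \<subseteq> Pow V" "card SS \<le> n^2"
        define N where "N = real n"
        define r where "r = sqrt (ln N)"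
        have NR: "exp (R^2) \<le> N" using n0 unfolding N_def by linarith
        have N0: "0 < N" using NR exp_gt_zero[of "R^2"] by linarith
        have "ln (exp (R^2)) \<le> ln N" using NR N0 by (subst ln_le_cancel_iff) auto
        then have lnN: "R^2 \<le> ln N" by simp
        have lnN0: "0 \<le> ln N" using lnN zero_le_power2[of R] by linarith
        have "sqrt (R^2) \<le> sqrt (ln N)" using lnN by (rule real_sqrt_le_mono)
        then have rR: "R \<le> r" unfolding r_def using R1 by simp
        have r1: "1 \<le> r" using rR R1 by simp
        have lnr: "ln N = r^2" unfolding r_def using lnN0 by simp
        have Ne: "exp (r^2) = N" using lnr N0 by (metis exp_ln)
        note Rr = R[OF rR]
        have N2: "2 \<le> N" and bN: "b \<le> N" using Rr Ne by auto
        have n1: "0 < n" using N0 unfolding N_def by simp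
        define \<alpha> where "\<alpha> = 1 - \<theta> / (4 * \<gamma> * r)"
        have al: "0 < \<alpha>" "\<alpha> \<le> 1" unfolding \<alpha>_def using Rr th g r1 by auto
        define \<Delta> where "\<Delta> = exp (\<gamma> * r)"
        have D1: "1 \<le> \<Delta>" unfolding \<Delta>_def using g r1 by simp
        have Dal: "\<Delta> powr (1 - \<alpha>) * (1 - \<theta>) \<le> 1 - \<theta> / 2"
        proof -
          have "\<Delta> powr (1 - \<alpha>) = exp (\<theta> / 4)"
            unfolding \<Delta>_def \<alpha>_def using g r1 by (simp add: exp_powr_real)
          also have "\<dots> \<le> 1 + \<theta> / 4 + (\<theta> / 4)^2" using th by (intro exp_bound) auto
          also have "\<dots> \<le> 1 + \<theta> / 2" using th by (simp add: power2_eq_square field_simps mult_left_le)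
          finally have e: "\<Delta> powr (1 - \<alpha>) \<le> 1 + \<theta> / 2" .
          have "\<Delta> powr (1 - \<alpha>) * (1 - \<theta>) \<le> (1 + \<theta> / 2) * (1 - \<theta>)"
            using e th by (intro mult_right_mono) auto
          also have "\<dots> \<le> 1 - \<theta> / 2" using th by (simp add: algebra_simps power2_eq_square)
          finally show ?thesis .
        qed
        have lg1: "1 \<le> log 2 (b * N)"
        proof -
          have "2 * 1 \<le> b * N" using mult_mono[OF b, of 1 N] N2 b by simp
          then show ?thesis by simp
        qed
        have lge: "log 2 (b * N) = (ln b + r^2) / ln 2" unfolding log_def using b N0 by (simp add: ln_mult lnr)
        have pS: "N powr (1/4 - 1 / (17 * r)) = N powr (1/4) * exp (- r / 17)"
          using powr_split(1)[OF N0 lnr, of 17] r1 by simp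
        have pc: "N powr (- 3/4 - 1 / (18 * r)) = N powr (1/4) * exp (- r / 18) / N"
          using powr_split(2)[OF N0 lnr, of 18] r1 by simp
        have q0: "0 < N powr (1/4)" using N0 by simp
        have e17: "exp (- r / 17) \<le> exp (- r / 18)" "exp (- r / 18) \<le> 1" "exp (- r / 17) \<le> 1" using r1 by auto
        have bl1: "1 \<le> b * log 2 (b * N)" using mult_mono[OF _ lg1, of 1 b] b by simp
        define q where "q = N powr (1/4)"
        have Aok: "q * exp (- r / 17) / (b * log 2 (b * N)) \<le> Aa \<and> Aa \<le> q"
          if "Aa \<in> {N powr (1/4 - 1 / (17 * r)), N powr (- 3/4 - 1 / (18 * r)) / (b / N),
                   N powr (- 3/4 - 1 / (18 * r)) / (b / N * log 2 (b * N))}" for Aa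
        proof -
          have qq: "0 < q" unfolding q_def using q0 .
          have A1: "q * exp (- r / 17) / (b * log 2 (b * N)) \<le> q * exp (- r / 17)"
            using qq bl1 by (intro div_le_self_r) auto
          have qN: "q / N / (b / N) = q / b" using N0 b by simp
          have qN2: "q / N / (b / N * log 2 (b * N)) = q / (b * log 2 (b * N))" using N0 b by simp
          have B17: "q * exp (- r / 17) / (b * log 2 (b * N)) \<le> q * exp (- r / 18) / (b * log 2 (b * N))"
            using e17 qq bl1 by (intro divide_right_mono mult_left_mono) auto
          have B18: "q * exp (- r / 18) / (b * log 2 (b * N)) \<le> q * exp (- r / 18) / b"
            using qq b lg1 e17 by (intro divide_left_mono) (auto intro: mult_pos_pos)
          have U18: "q * exp (- r / 18) / b \<le> q * exp (- r / 18)" using qq b by (intro div_le_self_r) auto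
          have U18b: "q * exp (- r / 18) \<le> q" using qq e17 by (simp add: mult_le_cancel_left1)
          have U18c: "q * exp (- r / 18) / (b * log 2 (b * N)) \<le> q * exp (- r / 18)" using qq bl1 by (intro div_le_self_r) auto
          have U17: "q * exp (- r / 17) \<le> q" using qq e17 by (simp add: mult_le_cancel_left1)
          have c1: "N powr (1/4 - 1 / (17 * r)) = q * exp (- r / 17)" unfolding pS q_def ..
          have c2: "N powr (- 3/4 - 1 / (18 * r)) / (b / N) = q * exp (- r / 18) / b"
            unfolding pc q_def[symmetric] using N0 b by (simp add: field_simps)
          have c3: "N powr (- 3/4 - 1 / (18 * r)) / (b / N * log 2 (b * N)) = q * exp (- r / 18) / (b * log 2 (b * N))"
            unfolding pc q_def[symmetric] using N0 b by (simp add: field_simps)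
          show ?thesis using that unfolding c1 c2 c3
            using A1 B17 B18 U18 U18b U18c U17 by auto
        qed
        have num: "2 * ((2 / (2 * \<epsilon> / b)) * (real m + 1) powr \<alpha>) \<le> Aa \<and> Aa \<le> real m + 1 \<and>
          2 * exp (- (Aa^2 * (2 * \<epsilon> / b) / (16 * ((2 / (2 * \<epsilon> / b)) * (real m + 1) powr \<alpha>) * (real m + 1)))) \<le> 1 / real n ^ 3"
          if "Aa \<in> {N powr (1/4 - 1 / (17 * r)), N powr (- 3/4 - 1 / (18 * r)) / (b / N),
                   N powr (- 3/4 - 1 / (18 * r)) / (b / N * log 2 (b * N))}" for Aa
        proof -
          have M1': "N powr (1/4) + 1 \<le> real m + 1" "real m + 1 \<le> 3 * exp (\<gamma> * r) * N powr (1/4)"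
            using M1 M2 unfolding N_def r_def by auto
          have AA: "N powr (1/4) * exp (- r / 17) / (b * log 2 (b * N)) \<le> Aa" "Aa \<le> N powr (1/4)"
            using Aok[OF that] unfolding q_def by auto
          note nm = numeric[OF th g b N2 r_def r1 _ _ _ M1' AA]
          have E: "\<theta> / (4 * \<gamma> * r) < 1"
            "(12 / \<theta>) * exp (-3*r) * (b * ((ln b + r^2) / ln 2)) \<le> exp (- r / 17)"
            "3 * r^2 + 1 \<le> \<theta>^2 * exp (2*r) * exp (- r / 17)^2 / (288 * (b * ((ln b + r^2) / ln 2))^2)"
            using Rr by auto
          show ?thesis using nm[OF E] unfolding \<alpha>_def \<theta>_def N_def by simp
        qed
        have mainr: "random_tree_prob V E x m A v0 (\<lambda>f. self_avoiding m f \<and> S_a_c_expected n V E x SS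
            (N powr (1/4 - 1 / (17 * r))) (N powr (- 3/4 - 1 / (18 * r))) (f ` {0..m}))
          \<ge> 1 - real m ^ 2 * b / real n - real n ^ 2 * (1 / real n ^ 3) - 4 * real n * (1 / real n ^ 3)"
        proof (rule main[OF G M B T _ v0 SS _ b _ n1 _ al D1])
          show "\<forall>i\<in>{0..m}. real (tree_degree A i) \<le> \<Delta>" using TD unfolding \<Delta>_def r_def N_def .
          show "0 < \<epsilon>" using \<epsilon> by simp
          show "2 * \<epsilon> \<le> b" using \<epsilon> b by simp
          show "b \<le> real n" using bN unfolding N_def .
          show "\<Delta> powr (1 - \<alpha>) * (1 - 2 * \<epsilon> / b) \<le> 1 - 2 * \<epsilon> / b / 2" using Dal unfolding \<theta>_def .
          fix Aa assume "Aa \<in> {N powr (1/4 - 1 / (17 * r)), N powr (- 3/4 - 1 / (18 * r)) / (b / real n),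
              N powr (- 3/4 - 1 / (18 * r)) / (b / real n * log 2 (b * real n))}"
          then show "2 * ((2 / (2 * \<epsilon> / b)) * (real m + 1) powr \<alpha>) \<le> Aa \<and> Aa \<le> real m + 1 \<and>
            2 * exp (- (Aa^2 * (2 * \<epsilon> / b) / (16 * ((2 / (2 * \<epsilon> / b)) * (real m + 1) powr \<alpha>) * (real m + 1)))) \<le> 1 / real n ^ 3"
            using num unfolding N_def by blast
        qed
        have fin': "1 - real m ^ 2 * b / N - N ^ 2 * (1 / N ^ 3) - 4 * N * (1 / N ^ 3) \<ge> 1 - N powr (-1/3)"
        proof (rule final_ineq[OF N0 lnr])
          show "0 \<le> r" using r1 by simp
          show "0 < b" using b by simp
          show "real (m + 1) \<le> 3 * exp (\<gamma> * r) * N powr (1/4)" using M2 unfolding N_def r_def .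
          show "9 * b * exp (2*\<gamma>*r) * exp (- (r^2/2)) + exp (- (r^2)) + 4 * exp (- (2 * r^2)) \<le> exp (- (r^2/3))"
            using Rr by blast
        qed
        then have fin: "1 - real m ^ 2 * b / real n - real n ^ 2 * (1 / real n ^ 3) - 4 * real n * (1 / real n ^ 3) \<ge> 1 - real n powr (-1/3)"
          unfolding N_def .
        show "let P = random_tree_prob V E x m A v0
             (\<lambda>f. self_avoiding m f \<and>
                  S_a_c_expected n V E x SS
                    (real n powr (1/4 - 1 / (17 * sqrt (ln (real n)))))
                    (real n powr (- 3/4 - 1 / (18 * sqrt (ln (real n)))))
                    (f ` {0..m}))
       in P \<ge> 1 - real m ^ 2 * b / real n - real n ^ 2 * (1 / real n ^ 3) - 4 * real n * (1 / real n ^ 3)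
          \<and> 1 - real m ^ 2 * b / real n - real n ^ 2 * (1 / real n ^ 3) - 4 * real n * (1 / real n ^ 3)
              \<ge> 1 - real n powr (-1/3)"
          using mainr fin unfolding Let_def N_def r_def by simp
      qed
    qed
  qed
qed


end
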